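(* Let $R$ be an algebra over a field $\mathbb{F}$ with more than two elements. Then $R$ is of right invariant module type if and only if every indecomposable right $R$-module is automorphism-invariant.
   Context: Algebras are associative with identity; modules are unital right modules. $E(M)$ denotes the injective hull of $M$. A module $M$ is quasi-injective if every homomorphism from a submodule of $M$ to $M$ extends to an endomorphism of $M$. A module $M$ is automorphism-invariant if $\sigma(M)\subseteq M$ for every automorphism $\sigma$ of $E(M)$. A ring $R$ is of right invariant module type if every indecomposable right $R$-module is quasi-injective. *)

theory Defs
  imports "HOL-Algebra.Ring" "HOL-Algebra.RingHom"
begin

record ('r, 'm) rmod =
  mcarrier :: "'m set"
  madd :: "'m \<Rightarrow> 'm \<Rightarrow> 'm"
  mzero :: "'m"
  msmult :: "'m \<Rightarrow> 'r \<Rightarrow> 'm"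

definition add_monoid :: "('r, 'm) rmod \<Rightarrow> 'm monoid" where
  "add_monoid M = \<lparr>carrier = mcarrier M, mult = madd M, one = mzero M\<rparr>"

definition right_module :: "('r, 'c) ring_scheme \<Rightarrow> ('r, 'm) rmod \<Rightarrow> bool" where
  "right_module R M \<longleftrightarrow> ring R \<and> comm_group (add_monoid M) \<and>
     (\<forall>x\<in>mcarrier M. \<forall>r\<in>carrier R. msmult M x r \<in> mcarrier M) \<and>
     (\<forall>x\<in>mcarrier M. \<forall>r\<in>carrier R. \<forall>s\<in>carrier R.
        msmult M x (r \<oplus>\<^bsub>R\<^esub> s) = madd M (msmult M x r) (msmult M x s)) \<and>
     (\<forall>x\<in>mcarrier M. \<forall>y\<in>mcarrier M. \<forall>r\<in>carrier R.
        msmult M (madd M x y) r = madd M (msmult M x r) (msmult M y r)) \<and>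
     (\<forall>x\<in>mcarrier M. \<forall>r\<in>carrier R. \<forall>s\<in>carrier R.
        msmult M x (r \<otimes>\<^bsub>R\<^esub> s) = msmult M (msmult M x r) s) \<and>
     (\<forall>x\<in>mcarrier M. msmult M x \<one>\<^bsub>R\<^esub> = x)"

definition rsubmodule :: "('r, 'c) ring_scheme \<Rightarrow> ('r, 'm) rmod \<Rightarrow> 'm set \<Rightarrow> bool" where
  "rsubmodule R M N \<longleftrightarrow> N \<subseteq> mcarrier M \<and> mzero M \<in> N \<and>
     (\<forall>x\<in>N. \<forall>y\<in>N. madd M x y \<in> N) \<and>
     (\<forall>x\<in>N. \<forall>r\<in>carrier R. msmult M x r \<in> N)"

definition restr :: "('r, 'm) rmod \<Rightarrow> 'm set \<Rightarrow> ('r, 'm) rmod" where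
  "restr M N = M\<lparr>mcarrier := N\<rparr>"

definition rhom :: "('r, 'c) ring_scheme \<Rightarrow> ('r, 'm) rmod \<Rightarrow> ('r, 'n) rmod \<Rightarrow> ('m \<Rightarrow> 'n) \<Rightarrow> bool" where
  "rhom R A B f \<longleftrightarrow> f \<in> mcarrier A \<rightarrow> mcarrier B \<and>
     (\<forall>x\<in>mcarrier A. \<forall>y\<in>mcarrier A. f (madd A x y) = madd B (f x) (f y)) \<and>
     (\<forall>x\<in>mcarrier A. \<forall>r\<in>carrier R. f (msmult A x r) = msmult B (f x) r)"

definition quasi_injective :: "('r, 'c) ring_scheme \<Rightarrow> ('r, 'm) rmod \<Rightarrow> bool" where
  "quasi_injective R M \<longleftrightarrow> (\<forall>N f. rsubmodule R M N \<and> rhom R (restr M N) M f \<longrightarrow>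
      (\<exists>g. rhom R M M g \<and> (\<forall>x\<in>N. g x = f x)))"

definition indecomposable :: "('r, 'c) ring_scheme \<Rightarrow> ('r, 'm) rmod \<Rightarrow> bool" where
  "indecomposable R M \<longleftrightarrow> mcarrier M \<noteq> {mzero M} \<and>
     (\<forall>A B. rsubmodule R M A \<and> rsubmodule R M B \<and> A \<inter> B = {mzero M} \<and>
        {madd M a b | a b. a \<in> A \<and> b \<in> B} = mcarrier M \<longrightarrow>
        A = {mzero M} \<or> B = {mzero M})"

definition regular_module :: "('r, 'c) ring_scheme \<Rightarrow> ('r, 'r) rmod" where
  "regular_module R = \<lparr>mcarrier = carrier R, madd = add R, mzero = zero R, msmult = mult R\<rparr>"

text \<open>Injective module, via Baer's criterion (right ideals of R).\<close>
definition rinjective :: "('r, 'c) ring_scheme \<Rightarrow> ('r, 'e) rmod \<Rightarrow> bool" where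
  "rinjective R E \<longleftrightarrow> right_module R E \<and>
     (\<forall>I f. rsubmodule R (regular_module R) I \<and> rhom R (restr (regular_module R) I) E f \<longrightarrow>
        (\<exists>g. rhom R (regular_module R) E g \<and> (\<forall>x\<in>I. g x = f x)))"

definition essential :: "('r, 'c) ring_scheme \<Rightarrow> ('r, 'm) rmod \<Rightarrow> 'm set \<Rightarrow> bool" where
  "essential R M N \<longleftrightarrow> rsubmodule R M N \<and>
     (\<forall>K. rsubmodule R M K \<and> K \<noteq> {mzero M} \<longrightarrow> K \<inter> N \<noteq> {mzero M})"

definition injective_hull :: "('r, 'c) ring_scheme \<Rightarrow> ('r, 'm) rmod \<Rightarrow> ('r, 'e) rmod \<Rightarrow> ('m \<Rightarrow> 'e) \<Rightarrow> bool" where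
  "injective_hull R M E \<iota> \<longleftrightarrow> right_module R M \<and> rinjective R E \<and> rhom R M E \<iota> \<and>
     inj_on \<iota> (mcarrier M) \<and> essential R E (\<iota> ` mcarrier M)"

definition rautomorphism :: "('r, 'c) ring_scheme \<Rightarrow> ('r, 'e) rmod \<Rightarrow> ('e \<Rightarrow> 'e) \<Rightarrow> bool" where
  "rautomorphism R E \<sigma> \<longleftrightarrow> rhom R E E \<sigma> \<and> bij_betw \<sigma> (mcarrier E) (mcarrier E)"

definition aut_invariant :: "('r, 'c) ring_scheme \<Rightarrow> ('r, 'm) rmod \<Rightarrow> 'e itself \<Rightarrow> bool" where
  "aut_invariant R M (T :: 'e itself) \<longleftrightarrow>
     (\<forall>(E :: ('r, 'e) rmod) \<iota>. injective_hull R M E \<iota> \<longrightarrow>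
        (\<forall>\<sigma>. rautomorphism R E \<sigma> \<longrightarrow> \<sigma> ` (\<iota> ` mcarrier M) \<subseteq> \<iota> ` mcarrier M))"

definition right_invariant_module_type :: "('r, 'c) ring_scheme \<Rightarrow> 'm itself \<Rightarrow> bool" where
  "right_invariant_module_type R (T :: 'm itself) \<longleftrightarrow>
     (\<forall>M :: ('r, 'm) rmod. right_module R M \<and> indecomposable R M \<longrightarrow> quasi_injective R M)"

definition is_algebra_over :: "('f, 'a) ring_scheme \<Rightarrow> ('r, 'c) ring_scheme \<Rightarrow> ('f \<Rightarrow> 'r) \<Rightarrow> bool" where
  "is_algebra_over F R \<phi> \<longleftrightarrow> field F \<and> ring R \<and> \<phi> \<in> ring_hom F R \<and>
     (\<forall>a\<in>carrier F. \<forall>r\<in>carrier R. \<phi> a \<otimes>\<^bsub>R\<^esub> r = r \<otimes>\<^bsub>R\<^esub> \<phi> a)"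

end

theory Submission
  imports Defs
begin

lemma add_monoid_simps[simp]:
  "carrier (add_monoid M) = mcarrier M" "mult (add_monoid M) = madd M" "one (add_monoid M) = mzero M"
  by (simp_all add: add_monoid_def)

lemma restr_simps[simp]:
  "mcarrier (restr M N) = N" "madd (restr M N) = madd M" "mzero (restr M N) = mzero M"
  "msmult (restr M N) = msmult M"
  by (simp_all add: restr_def)

lemma regular_simps[simp]:
  "mcarrier (regular_module R) = carrier R" "madd (regular_module R) = add R"
  "mzero (regular_module R) = zero R" "msmult (regular_module R) = mult R"
  by (simp_all add: regular_module_def)

definition AG :: "('r, 'm) rmod \<Rightarrow> 'm ring" where
  "AG M = \<lparr>carrier = mcarrier M, mult = (\<lambda>x y. mzero M), one = mzero M, zero = mzero M, add = madd M\<rparr>"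

lemma AG_simps[simp]:
  "carrier (AG M) = mcarrier M" "add (AG M) = madd M" "zero (AG M) = mzero M"
  by (simp_all add: AG_def)

locale rmodule =
  fixes R :: "('r, 'c) ring_scheme" and M :: "('r, 'm) rmod"
  assumes rmod: "right_module R M"
begin

sublocale ring R using rmod by (simp add: right_module_def)

lemma cg: "comm_group (add_monoid M)" using rmod by (simp add: right_module_def)

sublocale A: abelian_group "AG M"
proof -
  interpret G: comm_group "add_monoid M" by (rule cg)
  show "abelian_group (AG M)"
    apply (rule abelian_groupI)
    using G.m_closed G.one_closed G.m_assoc G.m_comm G.l_one G.l_inv_ex by auto
qed

lemma sm_closed[simp, intro]: "x \<in> mcarrier M \<Longrightarrow> r \<in> carrier R \<Longrightarrow> msmult M x r \<in> mcarrier M"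
  using rmod by (simp add: right_module_def)
lemma sm_radd: "x \<in> mcarrier M \<Longrightarrow> r \<in> carrier R \<Longrightarrow> s \<in> carrier R \<Longrightarrow>
  msmult M x (r \<oplus>\<^bsub>R\<^esub> s) = madd M (msmult M x r) (msmult M x s)"
  using rmod by (simp add: right_module_def)
lemma sm_ladd: "x \<in> mcarrier M \<Longrightarrow> y \<in> mcarrier M \<Longrightarrow> r \<in> carrier R \<Longrightarrow>
  msmult M (madd M x y) r = madd M (msmult M x r) (msmult M y r)"
  using rmod by (simp add: right_module_def)
lemma sm_assoc: "x \<in> mcarrier M \<Longrightarrow> r \<in> carrier R \<Longrightarrow> s \<in> carrier R \<Longrightarrow>
  msmult M x (r \<otimes>\<^bsub>R\<^esub> s) = msmult M (msmult M x r) s"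
  using rmod by (simp add: right_module_def)
lemma sm_one[simp]: "x \<in> mcarrier M \<Longrightarrow> msmult M x \<one>\<^bsub>R\<^esub> = x"
  using rmod by (simp add: right_module_def)

lemma add_closed[simp, intro]: "x \<in> mcarrier M \<Longrightarrow> y \<in> mcarrier M \<Longrightarrow> madd M x y \<in> mcarrier M"
  using A.a_closed by simp
lemma zero_closed[simp, intro]: "mzero M \<in> mcarrier M"
  using A.zero_closed by simp
lemma neg_closed[simp, intro]: "x \<in> mcarrier M \<Longrightarrow> \<ominus>\<^bsub>AG M\<^esub> x \<in> mcarrier M"
  using A.a_inv_closed by simp
lemma add_assoc: "x \<in> mcarrier M \<Longrightarrow> y \<in> mcarrier M \<Longrightarrow> z \<in> mcarrier M \<Longrightarrow>
  madd M (madd M x y) z = madd M x (madd M y z)"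
  using A.a_assoc[of x y z] by simp
lemma add_comm: "x \<in> mcarrier M \<Longrightarrow> y \<in> mcarrier M \<Longrightarrow> madd M x y = madd M y x"
  using A.a_comm[of x y] by simp
lemma add_lcomm: "x \<in> mcarrier M \<Longrightarrow> y \<in> mcarrier M \<Longrightarrow> z \<in> mcarrier M \<Longrightarrow>
  madd M x (madd M y z) = madd M y (madd M x z)"
  using A.a_lcomm[of x y z] by simp
lemmas add_ac = add_assoc add_comm add_lcomm
lemma zero_l[simp]: "x \<in> mcarrier M \<Longrightarrow> madd M (mzero M) x = x"
  using A.l_zero[of x] by simp
lemma zero_r[simp]: "x \<in> mcarrier M \<Longrightarrow> madd M x (mzero M) = x"
  using A.r_zero[of x] by simp
lemma neg_r[simp]: "x \<in> mcarrier M \<Longrightarrow> madd M x (\<ominus>\<^bsub>AG M\<^esub> x) = mzero M"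
  using A.r_neg[of x] by simp
lemma neg_l[simp]: "x \<in> mcarrier M \<Longrightarrow> madd M (\<ominus>\<^bsub>AG M\<^esub> x) x = mzero M"
  using A.l_neg[of x] by simp
lemma neg_r2[simp]: "x \<in> mcarrier M \<Longrightarrow> y \<in> mcarrier M \<Longrightarrow> madd M x (madd M (\<ominus>\<^bsub>AG M\<^esub> x) y) = y"
  by (simp add: add_assoc[symmetric])
lemma neg_l2[simp]: "x \<in> mcarrier M \<Longrightarrow> y \<in> mcarrier M \<Longrightarrow> madd M (\<ominus>\<^bsub>AG M\<^esub> x) (madd M x y) = y"
  by (simp add: add_assoc[symmetric])
lemma neg_neg[simp]: "x \<in> mcarrier M \<Longrightarrow> \<ominus>\<^bsub>AG M\<^esub> (\<ominus>\<^bsub>AG M\<^esub> x) = x"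
  using A.minus_minus[of x] by simp
lemma neg_add: "x \<in> mcarrier M \<Longrightarrow> y \<in> mcarrier M \<Longrightarrow>
  \<ominus>\<^bsub>AG M\<^esub> (madd M x y) = madd M (\<ominus>\<^bsub>AG M\<^esub> x) (\<ominus>\<^bsub>AG M\<^esub> y)"
  using A.minus_add[of x y] by simp
lemma sub_def: "x \<ominus>\<^bsub>AG M\<^esub> y = madd M x (\<ominus>\<^bsub>AG M\<^esub> y)"
  by (simp add: a_minus_def)
lemma add_lcancel: "x \<in> mcarrier M \<Longrightarrow> y \<in> mcarrier M \<Longrightarrow> z \<in> mcarrier M \<Longrightarrow>
   madd M x y = madd M x z \<longleftrightarrow> y = z"
proof
  assume xyz: "x \<in> mcarrier M" "y \<in> mcarrier M" "z \<in> mcarrier M" and e: "madd M x y = madd M x z"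
  have "madd M (\<ominus>\<^bsub>AG M\<^esub> x) (madd M x y) = madd M (\<ominus>\<^bsub>AG M\<^esub> x) (madd M x z)" using e by simp
  then show "y = z" using xyz by simp
qed simp
lemma add_rcancel: "x \<in> mcarrier M \<Longrightarrow> y \<in> mcarrier M \<Longrightarrow> z \<in> mcarrier M \<Longrightarrow>
   madd M y x = madd M z x \<longleftrightarrow> y = z"
  by (simp add: add_comm[of y x] add_comm[of z x] add_lcancel)
lemma add_self_zero: "x \<in> mcarrier M \<Longrightarrow> y \<in> mcarrier M \<Longrightarrow> madd M x y = x \<longleftrightarrow> y = mzero M"
  using add_lcancel[of x y "mzero M"] by simp
lemma add_eq_zero_iff: "x \<in> mcarrier M \<Longrightarrow> y \<in> mcarrier M \<Longrightarrow> madd M x (\<ominus>\<^bsub>AG M\<^esub> y) = mzero M \<longleftrightarrow> x = y"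
  using add_rcancel[of "\<ominus>\<^bsub>AG M\<^esub> y" x y] by simp
lemma eq_neg_iff: "x \<in> mcarrier M \<Longrightarrow> y \<in> mcarrier M \<Longrightarrow> madd M x y = mzero M \<longleftrightarrow> y = \<ominus>\<^bsub>AG M\<^esub> x"
  using add_lcancel[of x y "\<ominus>\<^bsub>AG M\<^esub> x"] by simp
lemma neg_zero[simp]: "\<ominus>\<^bsub>AG M\<^esub> (mzero M) = mzero M"
  using eq_neg_iff[of "mzero M" "mzero M"] by simp

lemma sm_zero_r[simp]: "x \<in> mcarrier M \<Longrightarrow> msmult M x \<zero>\<^bsub>R\<^esub> = mzero M"
proof -
  assume x: "x \<in> mcarrier M"
  have "msmult M x \<zero>\<^bsub>R\<^esub> = msmult M x (\<zero>\<^bsub>R\<^esub> \<oplus>\<^bsub>R\<^esub> \<zero>\<^bsub>R\<^esub>)" by simp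
  also have "\<dots> = madd M (msmult M x \<zero>\<^bsub>R\<^esub>) (msmult M x \<zero>\<^bsub>R\<^esub>)"
    using x by (intro sm_radd) auto
  finally have e: "madd M (msmult M x \<zero>\<^bsub>R\<^esub>) (msmult M x \<zero>\<^bsub>R\<^esub>) = msmult M x \<zero>\<^bsub>R\<^esub>" by simp
  have c: "msmult M x \<zero>\<^bsub>R\<^esub> \<in> mcarrier M" using x by simp
  show ?thesis using add_self_zero[OF c c] e by blast
qed

lemma sm_zero_l[simp]: "r \<in> carrier R \<Longrightarrow> msmult M (mzero M) r = mzero M"
proof -
  assume r: "r \<in> carrier R"
  have "msmult M (mzero M) r = msmult M (madd M (mzero M) (mzero M)) r"
    by simp
  also have "\<dots> = madd M (msmult M (mzero M) r) (msmult M (mzero M) r)"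
    using r by (intro sm_ladd) auto
  finally have e: "madd M (msmult M (mzero M) r) (msmult M (mzero M) r) = msmult M (mzero M) r" by simp
  have c: "msmult M (mzero M) r \<in> mcarrier M" using r by simp
  show ?thesis using add_self_zero[OF c c] e by blast
qed

lemma neg_sm: "x \<in> mcarrier M \<Longrightarrow> \<ominus>\<^bsub>AG M\<^esub> x = msmult M x (\<ominus>\<^bsub>R\<^esub> \<one>\<^bsub>R\<^esub>)"
proof -
  assume x: "x \<in> mcarrier M"
  have "madd M x (msmult M x (\<ominus>\<^bsub>R\<^esub> \<one>\<^bsub>R\<^esub>)) = madd M (msmult M x \<one>\<^bsub>R\<^esub>) (msmult M x (\<ominus>\<^bsub>R\<^esub> \<one>\<^bsub>R\<^esub>))"
    using x by simp
  also have "\<dots> = msmult M x (\<one>\<^bsub>R\<^esub> \<oplus>\<^bsub>R\<^esub> \<ominus>\<^bsub>R\<^esub> \<one>\<^bsub>R\<^esub>)"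
    using x by (intro sm_radd[symmetric]) auto
  also have "\<one>\<^bsub>R\<^esub> \<oplus>\<^bsub>R\<^esub> \<ominus>\<^bsub>R\<^esub> \<one>\<^bsub>R\<^esub> = \<zero>\<^bsub>R\<^esub>" by (simp add: r_neg)
  finally have "madd M x (msmult M x (\<ominus>\<^bsub>R\<^esub> \<one>\<^bsub>R\<^esub>)) = mzero M" using x by simp
  then show ?thesis using x eq_neg_iff[of x "msmult M x (\<ominus>\<^bsub>R\<^esub> \<one>\<^bsub>R\<^esub>)"] by auto
qed

lemma sm_neg_l: "x \<in> mcarrier M \<Longrightarrow> r \<in> carrier R \<Longrightarrow> msmult M (\<ominus>\<^bsub>AG M\<^esub> x) r = \<ominus>\<^bsub>AG M\<^esub> (msmult M x r)"
  by (simp add: neg_sm sm_assoc[symmetric] l_minus r_minus)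

lemma sm_neg_r: "x \<in> mcarrier M \<Longrightarrow> r \<in> carrier R \<Longrightarrow> msmult M x (\<ominus>\<^bsub>R\<^esub> r) = \<ominus>\<^bsub>AG M\<^esub> (msmult M x r)"
  by (simp add: neg_sm sm_assoc[symmetric] l_minus r_minus)

lemma sm_sub_r: "x \<in> mcarrier M \<Longrightarrow> r \<in> carrier R \<Longrightarrow> s \<in> carrier R \<Longrightarrow>
   msmult M x (r \<ominus>\<^bsub>R\<^esub> s) = madd M (msmult M x r) (\<ominus>\<^bsub>AG M\<^esub> (msmult M x s))"
  by (simp add: minus_eq sm_radd sm_neg_r)

end

context rmodule
begin

lemma sub_carrier: "rsubmodule R M N \<Longrightarrow> N \<subseteq> mcarrier M"
  by (simp add: rsubmodule_def)
lemma sub_zero: "rsubmodule R M N \<Longrightarrow> mzero M \<in> N"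
  by (simp add: rsubmodule_def)
lemma sub_add: "rsubmodule R M N \<Longrightarrow> x \<in> N \<Longrightarrow> y \<in> N \<Longrightarrow> madd M x y \<in> N"
  by (simp add: rsubmodule_def)
lemma sub_sm: "rsubmodule R M N \<Longrightarrow> x \<in> N \<Longrightarrow> r \<in> carrier R \<Longrightarrow> msmult M x r \<in> N"
  by (simp add: rsubmodule_def)
lemma sub_mem: "rsubmodule R M N \<Longrightarrow> x \<in> N \<Longrightarrow> x \<in> mcarrier M"
  by (auto simp add: rsubmodule_def)
lemma sub_neg: "rsubmodule R M N \<Longrightarrow> x \<in> N \<Longrightarrow> \<ominus>\<^bsub>AG M\<^esub> x \<in> N"
  using neg_sm[of x] sub_sm[of N x "\<ominus>\<^bsub>R\<^esub> \<one>\<^bsub>R\<^esub>"] sub_mem[of N x] by simp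
lemma sub_diff: "rsubmodule R M N \<Longrightarrow> x \<in> N \<Longrightarrow> y \<in> N \<Longrightarrow> madd M x (\<ominus>\<^bsub>AG M\<^esub> y) \<in> N"
  by (simp add: sub_add sub_neg)

lemma submodule_whole: "rsubmodule R M (mcarrier M)"
  by (auto simp add: rsubmodule_def)
lemma submodule_zero: "rsubmodule R M {mzero M}"
  by (auto simp add: rsubmodule_def)
lemma submodule_Int: "rsubmodule R M A \<Longrightarrow> rsubmodule R M B \<Longrightarrow> rsubmodule R M (A \<inter> B)"
  by (auto simp add: rsubmodule_def)
lemma submodule_sum: "rsubmodule R M A \<Longrightarrow> rsubmodule R M B \<Longrightarrow>
   rsubmodule R M {madd M a b | a b. a \<in> A \<and> b \<in> B}"
proof -
  assume A: "rsubmodule R M A" and B: "rsubmodule R M B"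
  show ?thesis unfolding rsubmodule_def
  proof (intro conjI ballI)
    show "{madd M a b |a b. a \<in> A \<and> b \<in> B} \<subseteq> mcarrier M"
      using A B by (auto dest: sub_mem)
    show "mzero M \<in> {madd M a b |a b. a \<in> A \<and> b \<in> B}"
      using A B sub_zero[OF A] sub_zero[OF B] by (intro CollectI exI[of _ "mzero M"]) simp
  next
    fix x y assume "x \<in> {madd M a b |a b. a \<in> A \<and> b \<in> B}" "y \<in> {madd M a b |a b. a \<in> A \<and> b \<in> B}"
    then obtain a b a' b' where ab: "a \<in> A" "b \<in> B" "x = madd M a b" "a' \<in> A" "b' \<in> B" "y = madd M a' b'"
      by blast
    have m: "a \<in> mcarrier M" "b \<in> mcarrier M" "a' \<in> mcarrier M" "b' \<in> mcarrier M"
      using ab A B sub_mem by auto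
    have "madd M x y = madd M (madd M a a') (madd M b b')"
      using m ab by (simp add: add_ac)
    then show "madd M x y \<in> {madd M a b |a b. a \<in> A \<and> b \<in> B}"
      using ab A B sub_add by blast
  next
    fix x r assume "x \<in> {madd M a b |a b. a \<in> A \<and> b \<in> B}" "r \<in> carrier R"
    then obtain a b where ab: "a \<in> A" "b \<in> B" "x = madd M a b" and r: "r \<in> carrier R"
      by blast
    have m: "a \<in> mcarrier M" "b \<in> mcarrier M"
      using ab A B sub_mem by auto
    have "msmult M x r = madd M (msmult M a r) (msmult M b r)"
      using m ab r by (simp add: sm_ladd)
    then show "msmult M x r \<in> {madd M a b |a b. a \<in> A \<and> b \<in> B}"
      using ab A B sub_sm r by blast
  qed
qed

lemma submodule_chain_Union:
  assumes "C \<noteq> {}" "\<forall>N\<in>C. rsubmodule R M N" "\<forall>A\<in>C. \<forall>B\<in>C. A \<subseteq> B \<or> B \<subseteq> A"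
  shows "rsubmodule R M (\<Union>C)"
  unfolding rsubmodule_def
proof (intro conjI ballI)
  show "\<Union> C \<subseteq> mcarrier M" using assms(2) sub_carrier by blast
  show "mzero M \<in> \<Union> C" using assms(1,2) sub_zero by blast
next
  fix x y assume "x \<in> \<Union>C" "y \<in> \<Union>C"
  then obtain A B where "A \<in> C" "B \<in> C" "x \<in> A" "y \<in> B" by blast
  then show "madd M x y \<in> \<Union>C" using assms(2,3) sub_add
    by (metis UnionI subsetD)
next
  fix x r assume "x \<in> \<Union>C" "r \<in> carrier R"
  then show "msmult M x r \<in> \<Union>C" using assms(2) sub_sm by blast
qed

lemma restr_module: "rsubmodule R M N \<Longrightarrow> right_module R (restr M N)"
proof -
  assume N: "rsubmodule R M N"
  have ag: "comm_group (add_monoid (restr M N))"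
  proof (rule comm_groupI)
    fix x y assume "x \<in> carrier (add_monoid (restr M N))" "y \<in> carrier (add_monoid (restr M N))"
    then show "x \<otimes>\<^bsub>add_monoid (restr M N)\<^esub> y \<in> carrier (add_monoid (restr M N))"
      using N by (simp add: sub_add)
  next
    show "\<one>\<^bsub>add_monoid (restr M N)\<^esub> \<in> carrier (add_monoid (restr M N))" using N by (simp add: sub_zero)
  next
    fix x y z assume "x \<in> carrier (add_monoid (restr M N))" "y \<in> carrier (add_monoid (restr M N))"
      "z \<in> carrier (add_monoid (restr M N))"
    then show "x \<otimes>\<^bsub>add_monoid (restr M N)\<^esub> y \<otimes>\<^bsub>add_monoid (restr M N)\<^esub> z =
           x \<otimes>\<^bsub>add_monoid (restr M N)\<^esub> (y \<otimes>\<^bsub>add_monoid (restr M N)\<^esub> z)"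
      using N sub_mem[OF N] by (simp add: add_assoc)
  next
    fix x y assume "x \<in> carrier (add_monoid (restr M N))" "y \<in> carrier (add_monoid (restr M N))"
    then show "x \<otimes>\<^bsub>add_monoid (restr M N)\<^esub> y = y \<otimes>\<^bsub>add_monoid (restr M N)\<^esub> x"
      using N sub_mem[OF N] by (simp add: add_comm)
  next
    fix x assume "x \<in> carrier (add_monoid (restr M N))"
    then show "\<one>\<^bsub>add_monoid (restr M N)\<^esub> \<otimes>\<^bsub>add_monoid (restr M N)\<^esub> x = x"
      using N sub_mem[OF N] by simp
  next
    fix x assume x: "x \<in> carrier (add_monoid (restr M N))"
    show "\<exists>y\<in>carrier (add_monoid (restr M N)). y \<otimes>\<^bsub>add_monoid (restr M N)\<^esub> x = \<one>\<^bsub>add_monoid (restr M N)\<^esub>"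
      using x N sub_mem[OF N] sub_neg[OF N] by (intro bexI[of _ "\<ominus>\<^bsub>AG M\<^esub> x"]) auto
  qed
  show ?thesis unfolding right_module_def
    using ag N sub_mem[OF N] sub_sm[OF N] sm_radd sm_ladd sm_assoc
    by (simp add: ring_axioms)
qed

end

lemma regular_rmodule: "ring R \<Longrightarrow> right_module R (regular_module R)"
proof -
  assume r: "ring R"
  interpret ring R by (rule r)
  have "comm_group (add_monoid (regular_module R))"
    unfolding add_monoid_def regular_module_def
    by (rule comm_groupI) (auto simp: a_ac intro: l_neg)
  then show ?thesis unfolding right_module_def
    by (simp add: r l_distr r_distr m_assoc)
qed

locale rhom2 = M: rmodule R M + N: rmodule R N
  for R :: "('r, 'c) ring_scheme" and M :: "('r, 'm) rmod" and N :: "('r, 'n) rmod" +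
  fixes f assumes hom: "rhom R M N f"
begin

lemma f_closed[simp, intro]: "x \<in> mcarrier M \<Longrightarrow> f x \<in> mcarrier N"
  using hom by (auto simp: rhom_def)
lemma f_add: "x \<in> mcarrier M \<Longrightarrow> y \<in> mcarrier M \<Longrightarrow> f (madd M x y) = madd N (f x) (f y)"
  using hom by (auto simp: rhom_def)
lemma f_sm: "x \<in> mcarrier M \<Longrightarrow> r \<in> carrier R \<Longrightarrow> f (msmult M x r) = msmult N (f x) r"
  using hom by (auto simp: rhom_def)
lemma f_zero[simp]: "f (mzero M) = mzero N"
  using f_sm[of "mzero M" "\<zero>\<^bsub>R\<^esub>"] by simp
lemma f_neg: "x \<in> mcarrier M \<Longrightarrow> f (\<ominus>\<^bsub>AG M\<^esub> x) = \<ominus>\<^bsub>AG N\<^esub> (f x)"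
  using f_sm[of x "\<ominus>\<^bsub>R\<^esub> \<one>\<^bsub>R\<^esub>"] M.neg_sm[of x] N.neg_sm[of "f x"] by simp
lemma f_diff: "x \<in> mcarrier M \<Longrightarrow> y \<in> mcarrier M \<Longrightarrow>
   f (madd M x (\<ominus>\<^bsub>AG M\<^esub> y)) = madd N (f x) (\<ominus>\<^bsub>AG N\<^esub> (f y))"
  by (simp add: f_add f_neg)

lemma ker_sub: "rsubmodule R M {x \<in> mcarrier M. f x = mzero N}"
  unfolding rsubmodule_def by (auto simp: f_add f_sm)

lemma img_sub: "rsubmodule R M S \<Longrightarrow> rsubmodule R N (f ` S)"
proof -
  assume S: "rsubmodule R M S"
  show ?thesis unfolding rsubmodule_def
  proof (intro conjI ballI)
    show "f ` S \<subseteq> mcarrier N" using M.sub_mem[OF S] by auto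
    show "mzero N \<in> f ` S" using M.sub_zero[OF S] f_zero by force
  next
    fix x y assume "x \<in> f ` S" "y \<in> f ` S"
    then obtain a b where "a \<in> S" "b \<in> S" "x = f a" "y = f b" by blast
    then show "madd N x y \<in> f ` S"
      using M.sub_add[OF S] M.sub_mem[OF S] f_add by (metis image_eqI)
  next
    fix x r assume "x \<in> f ` S" "r \<in> carrier R"
    then obtain a where "a \<in> S" "x = f a" "r \<in> carrier R" by blast
    then show "msmult N x r \<in> f ` S"
      using M.sub_sm[OF S] M.sub_mem[OF S] f_sm by (metis image_eqI)
  qed
qed

lemma img_sub_whole: "rsubmodule R N (f ` mcarrier M)"
  by (rule img_sub[OF M.submodule_whole])

lemma preimg_sub: "rsubmodule R N S \<Longrightarrow> rsubmodule R M {x \<in> mcarrier M. f x \<in> S}"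
  unfolding rsubmodule_def by (auto simp: f_add f_sm)

lemma restr_hom: "S \<subseteq> mcarrier M \<Longrightarrow> rhom R (restr M S) N f"
  using hom unfolding rhom_def by (auto simp: Pi_def subset_iff)

lemma inj_iff_ker: "inj_on f (mcarrier M) \<longleftrightarrow> (\<forall>x\<in>mcarrier M. f x = mzero N \<longrightarrow> x = mzero M)"
proof
  assume "inj_on f (mcarrier M)" then show "\<forall>x\<in>mcarrier M. f x = mzero N \<longrightarrow> x = mzero M"
    by (metis M.zero_closed f_zero inj_on_def)
next
  assume k: "\<forall>x\<in>mcarrier M. f x = mzero N \<longrightarrow> x = mzero M"
  show "inj_on f (mcarrier M)"
  proof (rule inj_onI)
    fix x y assume xy: "x \<in> mcarrier M" "y \<in> mcarrier M" "f x = f y"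
    then have "f (madd M x (\<ominus>\<^bsub>AG M\<^esub> y)) = mzero N" by (simp add: f_diff)
    then have "madd M x (\<ominus>\<^bsub>AG M\<^esub> y) = mzero M" using k xy by simp
    then show "x = y" using xy M.add_eq_zero_iff by simp
  qed
qed

lemma inv_hom:
  assumes inj: "inj_on f (mcarrier M)"
  shows "rhom R (restr N (f ` mcarrier M)) M (inv_into (mcarrier M) f)"
  unfolding rhom_def
proof (intro conjI ballI)
  show "inv_into (mcarrier M) f \<in> mcarrier (restr N (f ` mcarrier M)) \<rightarrow> mcarrier M"
    by (auto simp: inv_into_into)
next
  fix x y assume "x \<in> mcarrier (restr N (f ` mcarrier M))" "y \<in> mcarrier (restr N (f ` mcarrier M))"
  then obtain a b where ab: "a \<in> mcarrier M" "b \<in> mcarrier M" "x = f a" "y = f b" by auto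
  then show "inv_into (mcarrier M) f (madd (restr N (f ` mcarrier M)) x y) =
        madd M (inv_into (mcarrier M) f x) (inv_into (mcarrier M) f y)"
    using inj by (simp add: f_add[symmetric] inv_into_f_f)
next
  fix x r assume "x \<in> mcarrier (restr N (f ` mcarrier M))" "r \<in> carrier R"
  then obtain a where ab: "a \<in> mcarrier M" "x = f a" "r \<in> carrier R" by auto
  then show "inv_into (mcarrier M) f (msmult (restr N (f ` mcarrier M)) x r) =
       msmult M (inv_into (mcarrier M) f x) r"
    using inj by (simp add: f_sm[symmetric] inv_into_f_f)
qed

end

lemma rhom_cong: "right_module R A \<Longrightarrow> rhom R A B f \<Longrightarrow> (\<And>x. x \<in> mcarrier A \<Longrightarrow> f x = g x) \<Longrightarrow> rhom R A B g"
proof -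
  assume A: "right_module R A" and f: "rhom R A B f" and fg: "\<And>x. x \<in> mcarrier A \<Longrightarrow> f x = g x"
  interpret A: rmodule R A by (rule rmodule.intro[OF A])
  show ?thesis using f fg unfolding rhom_def by (auto simp: Pi_def)
qed

lemma rhom_id: "right_module R M \<Longrightarrow> rhom R M M (\<lambda>x. x)"
  unfolding rhom_def by auto

lemma rhom_comp: "rhom R A B f \<Longrightarrow> rhom R B C g \<Longrightarrow> rhom R A C (\<lambda>x. g (f x))"
  unfolding rhom_def by (auto simp: Pi_def)

lemma rhom_diff:
  assumes N: "right_module R N" and f: "rhom R M N f" and g: "rhom R M N g"
  shows "rhom R M N (\<lambda>x. madd N (f x) (\<ominus>\<^bsub>AG N\<^esub> g x))"
proof -
  interpret N: rmodule R N by (rule rmodule.intro[OF N])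
  show ?thesis unfolding rhom_def
  proof (intro conjI ballI)
    show "(\<lambda>x. madd N (f x) (\<ominus>\<^bsub>AG N\<^esub> g x)) \<in> mcarrier M \<rightarrow> mcarrier N"
      using f g by (auto simp: rhom_def)
  next
    fix x y assume xy: "x \<in> mcarrier M" "y \<in> mcarrier M"
    have c: "f x \<in> mcarrier N" "f y \<in> mcarrier N" "g x \<in> mcarrier N" "g y \<in> mcarrier N"
      using f g xy by (auto simp: rhom_def)
    show "madd N (f (madd M x y)) (\<ominus>\<^bsub>AG N\<^esub> g (madd M x y)) =
         madd N (madd N (f x) (\<ominus>\<^bsub>AG N\<^esub> g x)) (madd N (f y) (\<ominus>\<^bsub>AG N\<^esub> g y))"
      using f g xy c by (simp add: rhom_def N.neg_add N.add_ac)
  next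
    fix x r assume xr: "x \<in> mcarrier M" "r \<in> carrier R"
    have c: "f x \<in> mcarrier N" "g x \<in> mcarrier N"
      using f g xr by (auto simp: rhom_def)
    show "madd N (f (msmult M x r)) (\<ominus>\<^bsub>AG N\<^esub> g (msmult M x r)) =
         msmult N (madd N (f x) (\<ominus>\<^bsub>AG N\<^esub> g x)) r"
      using f g xr c by (simp add: rhom_def N.sm_ladd N.sm_neg_l)
  qed
qed

lemma rhom_plus:
  assumes N: "right_module R N" and f: "rhom R M N f" and g: "rhom R M N g"
  shows "rhom R M N (\<lambda>x. madd N (f x) (g x))"
proof -
  interpret N: rmodule R N by (rule rmodule.intro[OF N])
  show ?thesis unfolding rhom_def
  proof (intro conjI ballI)
    show "(\<lambda>x. madd N (f x) (g x)) \<in> mcarrier M \<rightarrow> mcarrier N"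
      using f g by (auto simp: rhom_def)
  next
    fix x y assume xy: "x \<in> mcarrier M" "y \<in> mcarrier M"
    have c: "f x \<in> mcarrier N" "f y \<in> mcarrier N" "g x \<in> mcarrier N" "g y \<in> mcarrier N"
      using f g xy by (auto simp: rhom_def)
    show "madd N (f (madd M x y)) (g (madd M x y)) =
         madd N (madd N (f x) (g x)) (madd N (f y) (g y))"
      using f g xy c by (simp add: rhom_def N.add_ac)
  next
    fix x r assume xr: "x \<in> mcarrier M" "r \<in> carrier R"
    have c: "f x \<in> mcarrier N" "g x \<in> mcarrier N"
      using f g xr by (auto simp: rhom_def)
    show "madd N (f (msmult M x r)) (g (msmult M x r)) = msmult N (madd N (f x) (g x)) r"
      using f g xr c by (simp add: rhom_def N.sm_ladd)
  qed
qed

lemma rhom_scal: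
  assumes M: "right_module R M" and s: "s \<in> carrier R"
    and central: "\<forall>r\<in>carrier R. s \<otimes>\<^bsub>R\<^esub> r = r \<otimes>\<^bsub>R\<^esub> s"
  shows "rhom R M M (\<lambda>x. msmult M x s)"
proof -
  interpret M: rmodule R M by (rule rmodule.intro[OF M])
  show ?thesis unfolding rhom_def
  proof (intro conjI ballI)
    show "(\<lambda>x. msmult M x s) \<in> mcarrier M \<rightarrow> mcarrier M" using s by (simp add: Pi_def)
  next
    fix x y assume "x \<in> mcarrier M" "y \<in> mcarrier M"
    then show "msmult M (madd M x y) s = madd M (msmult M x s) (msmult M y s)"
      using s by (simp add: M.sm_ladd)
  next
    fix x r assume xr: "x \<in> mcarrier M" "r \<in> carrier R"
    have "msmult M (msmult M x r) s = msmult M x (r \<otimes>\<^bsub>R\<^esub> s)" using xr s by (simp add: M.sm_assoc)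
    also have "\<dots> = msmult M x (s \<otimes>\<^bsub>R\<^esub> r)" using central xr by simp
    also have "\<dots> = msmult M (msmult M x s) r" using xr s by (simp add: M.sm_assoc)
    finally show "msmult M (msmult M x r) s = msmult M (msmult M x s) r" .
  qed
qed

context rmodule
begin

lemma add_eq_swap_iff:
  assumes "a \<in> mcarrier M" "b \<in> mcarrier M" "c \<in> mcarrier M" "e \<in> mcarrier M"
  shows "madd M a b = madd M c e \<longleftrightarrow> madd M b (\<ominus>\<^bsub>AG M\<^esub> e) = madd M c (\<ominus>\<^bsub>AG M\<^esub> a)"
proof -
  have id: "madd M (madd M a b) (\<ominus>\<^bsub>AG M\<^esub> (madd M c e)) =
            madd M (madd M b (\<ominus>\<^bsub>AG M\<^esub> e)) (\<ominus>\<^bsub>AG M\<^esub> (madd M c (\<ominus>\<^bsub>AG M\<^esub> a)))"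
    using assms by (simp add: neg_add add_ac)
  show ?thesis
    using add_eq_zero_iff[of "madd M a b" "madd M c e"]
      add_eq_zero_iff[of "madd M b (\<ominus>\<^bsub>AG M\<^esub> e)" "madd M c (\<ominus>\<^bsub>AG M\<^esub> a)"] id assms
    by simp
qed

end


definition good_ext :: "('r, 'c) ring_scheme \<Rightarrow> ('r, 'b) rmod \<Rightarrow> ('r, 'e) rmod \<Rightarrow> 'b set \<Rightarrow> ('b \<Rightarrow> 'e)
    \<Rightarrow> ('b \<times> 'e) set \<Rightarrow> bool" where
  "good_ext R B E A f G \<longleftrightarrow> G \<subseteq> mcarrier B \<times> mcarrier E \<and>
     (\<forall>x y y'. (x, y) \<in> G \<longrightarrow> (x, y') \<in> G \<longrightarrow> y = y') \<and>
     (\<forall>p\<in>G. \<forall>q\<in>G. (madd B (fst p) (fst q), madd E (snd p) (snd q)) \<in> G) \<and>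
     (\<forall>p\<in>G. \<forall>r\<in>carrier R. (msmult B (fst p) r, msmult E (snd p) r) \<in> G) \<and>
     (\<forall>x\<in>A. (x, f x) \<in> G)"

lemma good_ext_graph:
  assumes B: "right_module R B" and E: "right_module R E" and A: "rsubmodule R B A"
    and f: "rhom R (restr B A) E f"
  shows "good_ext R B E A f ((\<lambda>x. (x, f x)) ` A)"
proof -
  interpret B: rmodule R B by (rule rmodule.intro[OF B])
  interpret E: rmodule R E by (rule rmodule.intro[OF E])
  interpret F: rhom2 R "restr B A" E f
    by (intro rhom2.intro rmodule.intro rhom2_axioms.intro B.restr_module A E f)
  show ?thesis unfolding good_ext_def
  proof (intro conjI allI impI ballI)
    show "(\<lambda>x. (x, f x)) ` A \<subseteq> mcarrier B \<times> mcarrier E"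
      using B.sub_mem[OF A] F.f_closed by auto
  next
    fix x y y' assume "(x, y) \<in> (\<lambda>x. (x, f x)) ` A" "(x, y') \<in> (\<lambda>x. (x, f x)) ` A"
    then show "y = y'" by auto
  next
    fix p q assume "p \<in> (\<lambda>x. (x, f x)) ` A" "q \<in> (\<lambda>x. (x, f x)) ` A"
    then obtain a b where ab: "a \<in> A" "b \<in> A" "p = (a, f a)" "q = (b, f b)" by blast
    have "madd B a b \<in> A" using B.sub_add[OF A ab(1,2)] .
    moreover have "f (madd B a b) = madd E (f a) (f b)" using F.f_add[of a b] ab by simp
    ultimately show "(madd B (fst p) (fst q), madd E (snd p) (snd q)) \<in> (\<lambda>x. (x, f x)) ` A"
      using ab by (simp add: image_iff)
  next
    fix p r assume "p \<in> (\<lambda>x. (x, f x)) ` A" "r \<in> carrier R"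
    then obtain a where ab: "a \<in> A" "p = (a, f a)" "r \<in> carrier R" by blast
    have "msmult B a r \<in> A" using B.sub_sm[OF A ab(1,3)] .
    moreover have "f (msmult B a r) = msmult E (f a) r" using F.f_sm[of a r] ab by simp
    ultimately show "(msmult B (fst p) r, msmult E (snd p) r) \<in> (\<lambda>x. (x, f x)) ` A"
      using ab by (simp add: image_iff)
  next
    fix x assume "x \<in> A" then show "(x, f x) \<in> (\<lambda>x. (x, f x)) ` A" by blast
  qed
qed

lemma good_extD:
  assumes "good_ext R B E A f G"
  shows "G \<subseteq> mcarrier B \<times> mcarrier E"
    and "\<And>x y y'. (x, y) \<in> G \<Longrightarrow> (x, y') \<in> G \<Longrightarrow> y = y'"
    and "\<And>x y x' y'. (x, y) \<in> G \<Longrightarrow> (x', y') \<in> G \<Longrightarrow> (madd B x x', madd E y y') \<in> G"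
    and "\<And>x y r. (x, y) \<in> G \<Longrightarrow> r \<in> carrier R \<Longrightarrow> (msmult B x r, msmult E y r) \<in> G"
    and "\<And>a. a \<in> A \<Longrightarrow> (a, f a) \<in> G"
proof -
  note d = assms[unfolded good_ext_def]
  show "G \<subseteq> mcarrier B \<times> mcarrier E" using d by (elim conjE)
  show "\<And>x y y'. (x, y) \<in> G \<Longrightarrow> (x, y') \<in> G \<Longrightarrow> y = y'" using d by (elim conjE) blast
  show "\<And>a. a \<in> A \<Longrightarrow> (a, f a) \<in> G" using d by (elim conjE) blast
  fix x y x' y' r
  show "(x, y) \<in> G \<Longrightarrow> (x', y') \<in> G \<Longrightarrow> (madd B x x', madd E y y') \<in> G"
  proof -
    assume "(x, y) \<in> G" "(x', y') \<in> G"
    then have "(madd B (fst (x, y)) (fst (x', y')), madd E (snd (x, y)) (snd (x', y'))) \<in> G"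
      using d by (elim conjE) blast
    then show ?thesis by simp
  qed
  show "(x, y) \<in> G \<Longrightarrow> r \<in> carrier R \<Longrightarrow> (msmult B x r, msmult E y r) \<in> G"
  proof -
    assume "(x, y) \<in> G" "r \<in> carrier R"
    then have "(msmult B (fst (x, y)) r, msmult E (snd (x, y)) r) \<in> G"
      using d by (elim conjE) blast
    then show ?thesis by simp
  qed
qed

lemma good_extI:
  assumes "G \<subseteq> mcarrier B \<times> mcarrier E"
    and "\<And>x y y'. (x, y) \<in> G \<Longrightarrow> (x, y') \<in> G \<Longrightarrow> y = y'"
    and "\<And>x y x' y'. (x, y) \<in> G \<Longrightarrow> (x', y') \<in> G \<Longrightarrow> (madd B x x', madd E y y') \<in> G"
    and "\<And>x y r. (x, y) \<in> G \<Longrightarrow> r \<in> carrier R \<Longrightarrow> (msmult B x r, msmult E y r) \<in> G"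
    and "\<And>a. a \<in> A \<Longrightarrow> (a, f a) \<in> G"
  shows "good_ext R B E A f G"
  unfolding good_ext_def
proof (intro conjI ballI allI impI)
  fix p q assume "p \<in> G" "q \<in> G"
  then show "(madd B (fst p) (fst q), madd E (snd p) (snd q)) \<in> G"
    using assms(3)[of "fst p" "snd p" "fst q" "snd q"] by simp
next
  fix p r assume "p \<in> G" "r \<in> carrier R"
  then show "(msmult B (fst p) r, msmult E (snd p) r) \<in> G"
    using assms(4)[of "fst p" "snd p" r] by simp
qed (use assms in blast)+

lemma good_ext_Union:
  assumes C: "C \<noteq> {}" "\<And>G. G \<in> C \<Longrightarrow> good_ext R B E A f G" "\<forall>G1\<in>C. \<forall>G2\<in>C. G1 \<subseteq> G2 \<or> G2 \<subseteq> G1"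
  shows "good_ext R B E A f (\<Union>C)"
proof -
  have common: "\<exists>G\<in>C. p \<in> G \<and> q \<in> G" if pq: "p \<in> \<Union>C" "q \<in> \<Union>C" for p q
  proof -
    obtain G1 G2 where "G1 \<in> C" "G2 \<in> C" "p \<in> G1" "q \<in> G2" using pq by blast
    then show ?thesis using assms(3) by blast
  qed
  show ?thesis
  proof (rule good_extI)
    show "\<Union> C \<subseteq> mcarrier B \<times> mcarrier E" using good_extD(1)[OF C(2)] by blast
  next
    fix x y y' assume "(x, y) \<in> \<Union> C" "(x, y') \<in> \<Union> C"
    then obtain G where "G \<in> C" "(x, y) \<in> G" "(x, y') \<in> G" using common by blast
    then show "y = y'" using good_extD(2)[OF C(2)] by blast
  next
    fix x y x' y' assume "(x, y) \<in> \<Union> C" "(x', y') \<in> \<Union> C"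
    then obtain G where "G \<in> C" "(x, y) \<in> G" "(x', y') \<in> G" using common by blast
    then show "(madd B x x', madd E y y') \<in> \<Union> C" using good_extD(3)[OF C(2)] by blast
  next
    fix x y r assume "(x, y) \<in> \<Union> C" "r \<in> carrier R"
    then obtain G where "G \<in> C" "(x, y) \<in> G" by blast
    then show "(msmult B x r, msmult E y r) \<in> \<Union> C" using good_extD(4)[OF C(2)] \<open>r \<in> carrier R\<close> by blast
  next
    fix a assume "a \<in> A"
    obtain G where "G \<in> C" using C(1) by blast
    then show "(a, f a) \<in> \<Union> C" using good_extD(5)[OF C(2)] \<open>a \<in> A\<close> by blast
  qed
qed

lemma baer_extend:
  assumes inj: "rinjective R E" and B: "right_module R B" and A: "rsubmodule R B A"
    and f: "rhom R (restr B A) E f"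
  shows "\<exists>g. rhom R B E g \<and> (\<forall>x\<in>A. g x = f x)"
proof -
  have E: "right_module R E" using inj by (simp add: rinjective_def)
  interpret B: rmodule R B by (rule rmodule.intro[OF B])
  interpret E: rmodule R E by (rule rmodule.intro[OF E])
  interpret F: rhom2 R "restr B A" E f
    by (intro rhom2.intro rmodule.intro rhom2_axioms.intro B.restr_module A E f)
  define S where "S = {G. good_ext R B E A f G}"
  have "\<forall>C\<in>chains S. \<exists>U\<in>S. \<forall>X\<in>C. X \<subseteq> U"
  proof
    fix C assume C: "C \<in> chains S"
    show "\<exists>U\<in>S. \<forall>X\<in>C. X \<subseteq> U"
    proof (cases "C = {}")
      case True
      then show ?thesis using good_ext_graph[OF B E A f] unfolding S_def by blast
    next
      case False
      have CS: "C \<subseteq> S" "\<forall>G1\<in>C. \<forall>G2\<in>C. G1 \<subseteq> G2 \<or> G2 \<subseteq> G1"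
        using C unfolding chains_def chain_subset_def by auto
      have "good_ext R B E A f (\<Union>C)"
        by (rule good_ext_Union) (use False CS S_def in blast)+
      then have "\<Union>C \<in> S" by (simp add: S_def)
      then show ?thesis by blast
    qed
  qed
  from Zorn_Lemma2[OF this] obtain G0 where G0S: "G0 \<in> S" and max: "\<forall>X\<in>S. G0 \<subseteq> X \<longrightarrow> X = G0"
    by blast
  have G0: "good_ext R B E A f G0" using G0S by (simp add: S_def)
  note G0_sub = good_extD(1)[OF G0] and G0_fun = good_extD(2)[OF G0] and G0_add = good_extD(3)[OF G0]
    and G0_sm = good_extD(4)[OF G0] and G0_A = good_extD(5)[OF G0]
  define D where "D = fst ` G0"
  define g where "g = (\<lambda>x. THE y. (x, y) \<in> G0)"
  have inD: "d \<in> D" if dy: "(d, y) \<in> G0" for d y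
    unfolding D_def by (rule image_eqI[OF _ dy]) simp
  have gD: "(d, g d) \<in> G0" if dD: "d \<in> D" for d
  proof -
    obtain p where p: "p \<in> G0" "d = fst p" using dD D_def by blast
    then have dy: "(d, snd p) \<in> G0" by simp
    have "g d = snd p" unfolding g_def using dy G0_fun by (intro the_equality) blast+
    then show ?thesis using dy by simp
  qed
  have gu: "y = g d" if dy: "(d, y) \<in> G0" for d y
    using G0_fun[OF dy gD[OF inD[OF dy]]] .
  have Dc: "d \<in> mcarrier B" if dD: "d \<in> D" for d using gD[OF dD] G0_sub by blast
  have gc: "g d \<in> mcarrier E" if dD: "d \<in> D" for d using gD[OF dD] G0_sub by blast
  have Dadd: "madd B d d' \<in> D \<and> g (madd B d d') = madd E (g d) (g d')" if dd: "d \<in> D" "d' \<in> D" for d d'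
  proof -
    have m: "(madd B d d', madd E (g d) (g d')) \<in> G0"
      using G0_add gD[OF dd(1)] gD[OF dd(2)] by blast
    show ?thesis using inD[OF m] gu[OF m] by simp
  qed
  have Dsm: "msmult B d r \<in> D \<and> g (msmult B d r) = msmult E (g d) r" if dr: "d \<in> D" "r \<in> carrier R" for d r
  proof -
    have m: "(msmult B d r, msmult E (g d) r) \<in> G0"
      using G0_sm gD[OF dr(1)] dr(2) by blast
    show ?thesis using inD[OF m] gu[OF m] by simp
  qed
  have AD: "a \<in> D \<and> g a = f a" if a: "a \<in> A" for a
    using inD[OF G0_A[OF a]] gu[OF G0_A[OF a]] by simp
  have gneg: "\<ominus>\<^bsub>AG B\<^esub> d \<in> D \<and> g (\<ominus>\<^bsub>AG B\<^esub> d) = \<ominus>\<^bsub>AG E\<^esub> (g d)" if "d \<in> D" for d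
    using Dsm[OF that, of "\<ominus>\<^bsub>R\<^esub> \<one>\<^bsub>R\<^esub>"] B.neg_sm[OF Dc[OF that]] E.neg_sm[OF gc[OF that]] by simp
  have zD: "mzero B \<in> D" and gz: "g (mzero B) = mzero E"
    using AD[of "mzero B"] B.sub_zero[OF A] F.f_zero by auto
  have full: "D = mcarrier B"
  proof (rule ccontr)
    assume "D \<noteq> mcarrier B"
    then obtain x where x: "x \<in> mcarrier B" "x \<notin> D" using Dc by blast
    define I where "I = {r \<in> carrier R. msmult B x r \<in> D}"
    define \<phi> where "\<phi> = (\<lambda>r. g (msmult B x r))"
    have I: "rsubmodule R (regular_module R) I"
      unfolding rsubmodule_def regular_simps
    proof (intro conjI ballI)
      show "I \<subseteq> carrier R" using I_def by auto
      show "\<zero>\<^bsub>R\<^esub> \<in> I" using I_def x zD by simp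
    next
      fix r s assume "r \<in> I" "s \<in> I"
      then show "r \<oplus>\<^bsub>R\<^esub> s \<in> I" using I_def x Dadd by (simp add: B.sm_radd)
    next
      fix r s assume "r \<in> I" "s \<in> carrier R"
      then show "r \<otimes>\<^bsub>R\<^esub> s \<in> I" using I_def x Dsm by (simp add: B.sm_assoc)
    qed
    have \<phi>: "rhom R (restr (regular_module R) I) E \<phi>"
      unfolding rhom_def restr_simps regular_simps
    proof (intro conjI ballI)
      show "\<phi> \<in> I \<rightarrow> mcarrier E" using I_def \<phi>_def gc by auto
    next
      fix r s assume "r \<in> I" "s \<in> I"
      then show "\<phi> (r \<oplus>\<^bsub>R\<^esub> s) = madd E (\<phi> r) (\<phi> s)" using I_def \<phi>_def x Dadd by (simp add: B.sm_radd)
    next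
      fix r s assume "r \<in> I" "s \<in> carrier R"
      then show "\<phi> (r \<otimes>\<^bsub>R\<^esub> s) = msmult E (\<phi> r) s" using I_def \<phi>_def x Dsm by (simp add: B.sm_assoc)
    qed
    obtain h where h: "rhom R (regular_module R) E h" and hI: "\<forall>r\<in>I. h r = \<phi> r"
      using inj I \<phi> unfolding rinjective_def by blast
    define e where "e = h \<one>\<^bsub>R\<^esub>"
    have ec: "e \<in> mcarrier E" using h e_def by (auto simp: rhom_def)
    have he: "h r = msmult E e r" if "r \<in> carrier R" for r
    proof -
      have "h (\<one>\<^bsub>R\<^esub> \<otimes>\<^bsub>R\<^esub> r) = msmult E (h \<one>\<^bsub>R\<^esub>) r"
        using h that B.one_closed unfolding rhom_def regular_simps by blast
      then show ?thesis using that by (simp add: e_def)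
    qed
    define G1 where "G1 = {(madd B d (msmult B x r), madd E (g d) (msmult E e r)) | d r. d \<in> D \<and> r \<in> carrier R}"
    have "good_ext R B E A f G1"
    proof (rule good_extI)
      show "G1 \<subseteq> mcarrier B \<times> mcarrier E" using G1_def Dc gc x ec by auto
    next
      fix z y y' assume "(z, y) \<in> G1" "(z, y') \<in> G1"
      then obtain d r d' r' where dr: "d \<in> D" "r \<in> carrier R" "d' \<in> D" "r' \<in> carrier R"
        "z = madd B d (msmult B x r)" "y = madd E (g d) (msmult E e r)"
        "z = madd B d' (msmult B x r')" "y' = madd E (g d') (msmult E e r')"
        unfolding G1_def by blast
      have c: "d \<in> mcarrier B" "d' \<in> mcarrier B" "g d \<in> mcarrier E" "g d' \<in> mcarrier E"
        using dr Dc gc by auto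
      have "madd B (msmult B x r) (\<ominus>\<^bsub>AG B\<^esub> (msmult B x r')) = madd B d' (\<ominus>\<^bsub>AG B\<^esub> d)"
        using B.add_eq_swap_iff[of d "msmult B x r" d' "msmult B x r'"] dr c x by simp
      then have xe: "msmult B x (r \<ominus>\<^bsub>R\<^esub> r') = madd B d' (\<ominus>\<^bsub>AG B\<^esub> d)"
        using x dr by (simp add: B.sm_sub_r)
      have rI: "r \<ominus>\<^bsub>R\<^esub> r' \<in> I" unfolding I_def using xe dr Dadd gneg by auto
      have "h (r \<ominus>\<^bsub>R\<^esub> r') = g (madd B d' (\<ominus>\<^bsub>AG B\<^esub> d))" using hI rI \<phi>_def xe by simp
      also have "\<dots> = madd E (g d') (\<ominus>\<^bsub>AG E\<^esub> (g d))" using Dadd gneg dr by simp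
      finally have "madd E (msmult E e r) (\<ominus>\<^bsub>AG E\<^esub> (msmult E e r')) = madd E (g d') (\<ominus>\<^bsub>AG E\<^esub> (g d))"
        using he[of "r \<ominus>\<^bsub>R\<^esub> r'"] dr ec by (simp add: E.sm_sub_r)
      then show "y = y'"
        using E.add_eq_swap_iff[of "g d" "msmult E e r" "g d'" "msmult E e r'"] dr c ec by simp
    next
      fix z1 y1 z2 y2 assume "(z1, y1) \<in> G1" "(z2, y2) \<in> G1"
      then obtain d r d' r' where dr: "d \<in> D" "r \<in> carrier R" "d' \<in> D" "r' \<in> carrier R"
        "z1 = madd B d (msmult B x r)" "y1 = madd E (g d) (msmult E e r)"
        "z2 = madd B d' (msmult B x r')" "y2 = madd E (g d') (msmult E e r')"
        unfolding G1_def by blast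
      have c: "d \<in> mcarrier B" "d' \<in> mcarrier B" "g d \<in> mcarrier E" "g d' \<in> mcarrier E"
        using dr Dc gc by auto
      have rr: "r \<oplus>\<^bsub>R\<^esub> r' \<in> carrier R" using dr by simp
      have eq1: "madd B z1 z2 = madd B (madd B d d') (msmult B x (r \<oplus>\<^bsub>R\<^esub> r'))"
        using dr c x by (simp add: B.sm_radd B.add_ac)
      have eq2: "madd E y1 y2 = madd E (g (madd B d d')) (msmult E e (r \<oplus>\<^bsub>R\<^esub> r'))"
        using dr c ec Dadd by (simp add: E.sm_radd E.add_ac)
      have dd: "madd B d d' \<in> D" using Dadd dr by blast
      show "(madd B z1 z2, madd E y1 y2) \<in> G1"
        unfolding G1_def eq1 eq2 using dd rr by blast
    next
      fix z y s assume "(z, y) \<in> G1" "s \<in> carrier R"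
      then obtain d r where dr: "d \<in> D" "r \<in> carrier R" "s \<in> carrier R"
        "z = madd B d (msmult B x r)" "y = madd E (g d) (msmult E e r)"
        unfolding G1_def by blast
      have c: "d \<in> mcarrier B" "g d \<in> mcarrier E"
        using dr Dc gc by auto
      have rr: "r \<otimes>\<^bsub>R\<^esub> s \<in> carrier R" using dr by simp
      have eq1: "msmult B z s = madd B (msmult B d s) (msmult B x (r \<otimes>\<^bsub>R\<^esub> s))"
        using dr c x by (simp add: B.sm_ladd B.sm_assoc)
      have eq2: "msmult E y s = madd E (g (msmult B d s)) (msmult E e (r \<otimes>\<^bsub>R\<^esub> s))"
        using dr c ec Dsm by (simp add: E.sm_ladd E.sm_assoc)
      have dd: "msmult B d s \<in> D" using Dsm dr by blast
      show "(msmult B z s, msmult E y s) \<in> G1"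
        unfolding G1_def eq1 eq2 using dd rr by blast
    next
      fix a assume a: "a \<in> A"
      have "(madd B a (msmult B x \<zero>\<^bsub>R\<^esub>), madd E (g a) (msmult E e \<zero>\<^bsub>R\<^esub>)) \<in> G1"
        unfolding G1_def using AD[OF a] by blast
      then show "(a, f a) \<in> G1" using AD[OF a] a x ec B.sub_mem[OF A] gc by simp
    qed
    then have G1S: "G1 \<in> S" by (simp add: S_def)
    have sub: "G0 \<subseteq> G1"
    proof
      fix p assume p: "p \<in> G0"
      obtain d y where pd: "p = (d, y)" by (cases p)
      then have dy: "(d, y) \<in> G0" using p by simp
      have dD: "d \<in> D" by (rule inD[OF dy])
      have yg: "y = g d" by (rule gu[OF dy])
      have z: "\<zero>\<^bsub>R\<^esub> \<in> carrier R" by simp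
      have "(madd B d (msmult B x \<zero>\<^bsub>R\<^esub>), madd E (g d) (msmult E e \<zero>\<^bsub>R\<^esub>)) \<in> G1"
        unfolding G1_def using dD z by blast
      then show "p \<in> G1" using x ec Dc[OF dD] gc[OF dD] pd yg by simp
    qed
    have "(madd B (mzero B) (msmult B x \<one>\<^bsub>R\<^esub>), madd E (g (mzero B)) (msmult E e \<one>\<^bsub>R\<^esub>)) \<in> G1"
      unfolding G1_def using zD by blast
    then have "(x, e) \<in> G1" using x ec gz by simp
    moreover have "(x, e) \<notin> G0" using x(2) inD by blast
    ultimately show False using max G1S sub by blast
  qed
  have "rhom R B E g" unfolding rhom_def
  proof (intro conjI ballI)
    show "g \<in> mcarrier B \<rightarrow> mcarrier E" using full gc by blast
  next
    fix y z assume "y \<in> mcarrier B" "z \<in> mcarrier B"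
    then show "g (madd B y z) = madd E (g y) (g z)" using full Dadd by blast
  next
    fix y r assume "y \<in> mcarrier B" "r \<in> carrier R"
    then show "g (msmult B y r) = msmult E (g y) r" using full Dsm by blast
  qed
  moreover have "\<forall>x\<in>A. g x = f x" using AD by blast
  ultimately show ?thesis by blast
qed

context rmodule
begin

lemma max_complement:
  assumes K: "rsubmodule R M K" and L: "rsubmodule R M L" and KL: "K \<inter> L = {mzero M}"
  shows "\<exists>C. rsubmodule R M C \<and> K \<subseteq> C \<and> C \<inter> L = {mzero M} \<and>
     (\<forall>C'. rsubmodule R M C' \<and> C \<subseteq> C' \<and> C' \<inter> L = {mzero M} \<longrightarrow> C' = C)"
proof -
  define S where "S = {C. rsubmodule R M C \<and> K \<subseteq> C \<and> C \<inter> L = {mzero M}}"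
  have "\<forall>C\<in>chains S. \<exists>U\<in>S. \<forall>X\<in>C. X \<subseteq> U"
  proof
    fix C assume C: "C \<in> chains S"
    have CS: "C \<subseteq> S" "\<forall>A\<in>C. \<forall>B\<in>C. A \<subseteq> B \<or> B \<subseteq> A"
      using C unfolding chains_def chain_subset_def by auto
    show "\<exists>U\<in>S. \<forall>X\<in>C. X \<subseteq> U"
    proof (cases "C = {}")
      case True
      have "K \<in> S" using K KL S_def by simp
      then show ?thesis using True by blast
    next
      case False
      have sub: "rsubmodule R M (\<Union>C)"
        by (rule submodule_chain_Union) (use False CS S_def in auto)
      have "K \<subseteq> \<Union>C" using False CS S_def by blast
      moreover have "\<Union>C \<inter> L \<subseteq> {mzero M}" using CS S_def by blast
      moreover have "mzero M \<in> \<Union>C" using sub sub_zero by blast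
      moreover have "mzero M \<in> L" using L sub_zero by blast
      ultimately have "\<Union>C \<in> S" using sub S_def by blast
      then show ?thesis by blast
    qed
  qed
  from Zorn_Lemma2[OF this] obtain C0 where C0S: "C0 \<in> S" and max: "\<forall>X\<in>S. C0 \<subseteq> X \<longrightarrow> X = C0"
    by blast
  have 1: "rsubmodule R M C0 \<and> K \<subseteq> C0 \<and> C0 \<inter> L = {mzero M}" using C0S by (simp add: S_def)
  have 2: "\<forall>C'. rsubmodule R M C' \<and> C0 \<subseteq> C' \<and> C' \<inter> L = {mzero M} \<longrightarrow> C' = C0"
  proof (intro allI impI)
    fix C' assume a: "rsubmodule R M C' \<and> C0 \<subseteq> C' \<and> C' \<inter> L = {mzero M}"
    then have "C' \<in> S" using 1 unfolding S_def by auto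
    then show "C' = C0" using max a by blast
  qed
  show ?thesis using 1 2 by blast
qed

end

lemma nontrivial_idem:
  assumes inj: "rinjective R E" and K: "rsubmodule R E K" and L: "rsubmodule R E L"
    and K0: "K \<noteq> {mzero E}" and L0: "L \<noteq> {mzero E}" and KL: "K \<inter> L = {mzero E}"
  shows "\<exists>p. rhom R E E p \<and> (\<forall>x\<in>mcarrier E. p (p x) = p x) \<and>
     (\<exists>x\<in>mcarrier E. p x \<noteq> mzero E) \<and> (\<exists>x\<in>mcarrier E. p x \<noteq> x)"
proof -
  have Em: "right_module R E" using inj by (simp add: rinjective_def)
  interpret E: rmodule R E by (rule rmodule.intro[OF Em])
  obtain C where C: "rsubmodule R E C" "K \<subseteq> C" "C \<inter> L = {mzero E}"
    and Cmax0': "\<forall>C'. rsubmodule R E C' \<and> C \<subseteq> C' \<and> C' \<inter> L = {mzero E} \<longrightarrow> C' = C"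
    using E.max_complement[OF K L KL] by (elim exE conjE) 
  have Cmax0: "\<And>C'. rsubmodule R E C' \<Longrightarrow> C \<subseteq> C' \<Longrightarrow> C' \<inter> L = {mzero E} \<Longrightarrow> C' = C"
    using Cmax0' by blast
  have LC: "L \<inter> C = {mzero E}" using C(3) by blast
  obtain L' where L': "rsubmodule R E L'" "L \<subseteq> L'" "L' \<inter> C = {mzero E}"
    and Lmax': "\<forall>C'. rsubmodule R E C' \<and> L' \<subseteq> C' \<and> C' \<inter> C = {mzero E} \<longrightarrow> C' = L'"
    using E.max_complement[OF L C(1) LC] by (elim exE conjE)
  have Lmax: "\<And>C'. rsubmodule R E C' \<Longrightarrow> L' \<subseteq> C' \<Longrightarrow> C' \<inter> C = {mzero E} \<Longrightarrow> C' = L'"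
    using Lmax' by blast
  have Cmax: "C' = C" if C': "rsubmodule R E C'" "C \<subseteq> C'" "C' \<inter> L' = {mzero E}" for C'
  proof (rule Cmax0[OF C'(1,2)])
    show "C' \<inter> L = {mzero E}" using C'(3) L'(2) E.sub_zero[OF C'(1)] E.sub_zero[OF L] by blast
  qed
  have Cm: "\<And>c. c \<in> C \<Longrightarrow> c \<in> mcarrier E" using E.sub_mem[OF C(1)] .
  have Lm: "\<And>l. l \<in> L' \<Longrightarrow> l \<in> mcarrier E" using E.sub_mem[OF L'(1)] .
  define S where "S = {madd E c l | c l. c \<in> C \<and> l \<in> L'}"
  have S: "rsubmodule R E S" unfolding S_def by (rule E.submodule_sum[OF C(1) L'(1)])
  have uniq: "c = c'" if "c \<in> C" "l \<in> L'" "c' \<in> C" "l' \<in> L'" "madd E c l = madd E c' l'" for c l c' l'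
  proof -
    have eq: "madd E l (\<ominus>\<^bsub>AG E\<^esub> l') = madd E c' (\<ominus>\<^bsub>AG E\<^esub> c)"
      using E.add_eq_swap_iff[of c l c' l'] that Cm Lm by simp
    have "madd E l (\<ominus>\<^bsub>AG E\<^esub> l') \<in> L'" using E.sub_diff[OF L'(1)] that by simp
    then have i1: "madd E c' (\<ominus>\<^bsub>AG E\<^esub> c) \<in> L'" by (simp only: eq)
    have i2: "madd E c' (\<ominus>\<^bsub>AG E\<^esub> c) \<in> C" using E.sub_diff[OF C(1)] that by simp
    have "madd E c' (\<ominus>\<^bsub>AG E\<^esub> c) \<in> L' \<inter> C" using i1 i2 by (rule IntI)
    then have "madd E c' (\<ominus>\<^bsub>AG E\<^esub> c) = mzero E" using L'(3) by simp
    then show "c = c'" using E.add_eq_zero_iff[of c' c] that Cm by simp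
  qed
  define \<pi> where "\<pi> = (\<lambda>z. THE c. c \<in> C \<and> (\<exists>l\<in>L'. z = madd E c l))"
  have \<pi>_eq: "\<pi> (madd E c l) = c" if "c \<in> C" "l \<in> L'" for c l
    unfolding \<pi>_def
  proof (rule the_equality)
    show "c \<in> C \<and> (\<exists>la\<in>L'. madd E c l = madd E c la)" using that by blast
  next
    fix c' assume "c' \<in> C \<and> (\<exists>la\<in>L'. madd E c l = madd E c' la)"
    then show "c' = c" using uniq[of c l c'] that by blast
  qed
  have \<pi>hom: "rhom R (restr E S) E \<pi>"
    unfolding rhom_def restr_simps
  proof (intro conjI ballI)
    show "\<pi> \<in> S \<rightarrow> mcarrier E" using \<pi>_eq Cm unfolding S_def by auto
  next
    fix x y assume "x \<in> S" "y \<in> S"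
    then obtain c l c' l' where cl: "c \<in> C" "l \<in> L'" "c' \<in> C" "l' \<in> L'" "x = madd E c l" "y = madd E c' l'"
      unfolding S_def by blast
    have "madd E x y = madd E (madd E c c') (madd E l l')" using cl Cm Lm by (simp add: E.add_ac)
    moreover have "madd E c c' \<in> C" "madd E l l' \<in> L'" using cl E.sub_add C(1) L'(1) by auto
    ultimately show "\<pi> (madd E x y) = madd E (\<pi> x) (\<pi> y)" using \<pi>_eq cl by simp
  next
    fix x r assume "x \<in> S" "r \<in> carrier R"
    then obtain c l where cl: "c \<in> C" "l \<in> L'" "x = madd E c l" and r: "r \<in> carrier R"
      unfolding S_def by blast
    have "msmult E x r = madd E (msmult E c r) (msmult E l r)" using cl Cm Lm r by (simp add: E.sm_ladd)
    moreover have "msmult E c r \<in> C" "msmult E l r \<in> L'" using cl E.sub_sm C(1) L'(1) r by auto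
    ultimately show "\<pi> (msmult E x r) = msmult E (\<pi> x) r" using \<pi>_eq cl by simp
  qed
  obtain p where p: "rhom R E E p" and pS: "\<forall>x\<in>S. p x = \<pi> x"
    using baer_extend[OF inj Em S \<pi>hom] by blast
  interpret P: rhom2 R E E p by (intro rhom2.intro rmodule.intro rhom2_axioms.intro Em p)
  have pC: "p c = c" if "c \<in> C" for c
  proof -
    have "madd E c (mzero E) \<in> S" unfolding S_def using that E.sub_zero[OF L'(1)] by blast
    then show ?thesis using pS \<pi>_eq[OF that E.sub_zero[OF L'(1)]] that Cm by simp
  qed
  have pL: "p l = mzero E" if "l \<in> L'" for l
  proof -
    have "madd E (mzero E) l \<in> S" unfolding S_def using that E.sub_zero[OF C(1)] by blast
    then show ?thesis using pS \<pi>_eq[OF E.sub_zero[OF C(1)] that] that Lm by simp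
  qed
  define Pre where "Pre = {x \<in> mcarrier E. p x \<in> L'}"
  have Pre: "rsubmodule R E Pre" unfolding Pre_def by (rule P.preimg_sub[OF L'(1)])
  have "L' \<subseteq> Pre" unfolding Pre_def using pL Lm E.sub_zero[OF L'(1)] by auto
  moreover have "Pre \<inter> C = {mzero E}"
  proof
    show "Pre \<inter> C \<subseteq> {mzero E}"
    proof
      fix x assume "x \<in> Pre \<inter> C"
      then have "x \<in> L'" "x \<in> C" using pC Pre_def by auto
      then show "x \<in> {mzero E}" using L'(3) by blast
    qed
    show "{mzero E} \<subseteq> Pre \<inter> C" using E.sub_zero[OF Pre] E.sub_zero[OF C(1)] by blast
  qed
  ultimately have PreL: "Pre = L'" using Lmax[OF Pre] by blast
  define Img where "Img = p ` mcarrier E"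
  have Img: "rsubmodule R E Img" unfolding Img_def by (rule P.img_sub_whole)
  have "C \<subseteq> Img" unfolding Img_def using pC Cm by (metis image_eqI subsetI)
  moreover have "Img \<inter> L' = {mzero E}"
  proof
    show "Img \<inter> L' \<subseteq> {mzero E}"
    proof
      fix y assume "y \<in> Img \<inter> L'"
      then obtain x where x: "x \<in> mcarrier E" "y = p x" "p x \<in> L'" unfolding Img_def by blast
      then have "x \<in> L'" using PreL Pre_def by blast
      then show "y \<in> {mzero E}" using pL x by simp
    qed
    show "{mzero E} \<subseteq> Img \<inter> L'" using E.sub_zero[OF Img] E.sub_zero[OF L'(1)] by blast
  qed
  ultimately have ImgC: "Img = C" using Cmax[OF Img] by blast
  have idem: "\<forall>x\<in>mcarrier E. p (p x) = p x"
  proof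
    fix x assume "x \<in> mcarrier E"
    then have "p x \<in> C" using ImgC Img_def by blast
    then show "p (p x) = p x" by (rule pC)
  qed
  obtain k where k: "k \<in> K" "k \<noteq> mzero E" using K0 E.sub_zero[OF K] by blast
  obtain l where l: "l \<in> L" "l \<noteq> mzero E" using L0 E.sub_zero[OF L] by blast
  have "p k \<noteq> mzero E" using pC k C(2) by auto
  moreover have "p l \<noteq> l" using pL l L'(2) by auto
  moreover have "k \<in> mcarrier E" "l \<in> mcarrier E" using k l C(2) L'(2) Cm Lm by auto
  ultimately show ?thesis using p idem by blast
qed

lemma rhom_corestrict: "rhom R A B f \<Longrightarrow> f ` mcarrier A \<subseteq> S \<Longrightarrow> rhom R A (restr B S) f"
  unfolding rhom_def by auto

locale hull_ctx = M: rmodule R M + E: rmodule R E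
  for R :: "('r, 'c) ring_scheme" and M :: "('r, 'm) rmod" and E :: "('r, 'e) rmod" +
  fixes \<iota> :: "'m \<Rightarrow> 'e"
  assumes hull: "injective_hull R M E \<iota>"
begin

definition Mi where "Mi = \<iota> ` mcarrier M"

lemma iota_hom: "rhom R M E \<iota>" using hull by (simp add: injective_hull_def)
lemma iota_inj: "inj_on \<iota> (mcarrier M)" using hull by (simp add: injective_hull_def)
lemma E_inj: "rinjective R E" using hull by (simp add: injective_hull_def)
lemma ess: "rsubmodule R E K \<Longrightarrow> K \<noteq> {mzero E} \<Longrightarrow> K \<inter> Mi \<noteq> {mzero E}"
  using hull by (simp add: injective_hull_def essential_def Mi_def)

sublocale I: rhom2 R M E \<iota>
  by (intro rhom2.intro M.rmodule_axioms E.rmodule_axioms rhom2_axioms.intro iota_hom)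

lemma Mi_sub: "rsubmodule R E Mi" unfolding Mi_def by (rule I.img_sub_whole)

lemma ess0: "rsubmodule R E K \<Longrightarrow> K \<inter> Mi \<subseteq> {mzero E} \<Longrightarrow> K = {mzero E}"
  using ess E.sub_zero Mi_sub by blast

lemma iota_zero_iff: "m \<in> mcarrier M \<Longrightarrow> \<iota> m = mzero E \<longleftrightarrow> m = mzero M"
  using iota_inj I.inj_iff_ker by auto

lemma inv_iota: "m \<in> mcarrier M \<Longrightarrow> inv_into (mcarrier M) \<iota> (\<iota> m) = m"
  using iota_inj by (simp add: inv_into_f_f)

lemma iota_inv: "y \<in> Mi \<Longrightarrow> \<iota> (inv_into (mcarrier M) \<iota> y) = y \<and> inv_into (mcarrier M) \<iota> y \<in> mcarrier M"
  unfolding Mi_def by (simp add: f_inv_into_f inv_into_into)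

lemma pullback_hom:
  assumes h: "rhom R E E h" and hM: "h ` Mi \<subseteq> Mi"
  shows "rhom R M M (\<lambda>m. inv_into (mcarrier M) \<iota> (h (\<iota> m)))"
proof -
  have c: "rhom R M (restr E Mi) (\<lambda>m. h (\<iota> m))"
    by (rule rhom_corestrict[OF rhom_comp[OF iota_hom h]]) (use hM Mi_def in auto)
  show ?thesis using rhom_comp[OF c I.inv_hom[OF iota_inj, folded Mi_def]] .
qed

lemma qi_invariant:
  assumes qi: "quasi_injective R M" and \<sigma>: "rhom R E E \<sigma>"
  shows "\<sigma> ` Mi \<subseteq> Mi"
proof -
  interpret S: rhom2 R E E \<sigma> by (intro rhom2.intro E.rmodule_axioms rhom2_axioms.intro \<sigma>)
  have si: "rhom R M E (\<lambda>m. \<sigma> (\<iota> m))" by (rule rhom_comp[OF iota_hom \<sigma>])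
  interpret SI: rhom2 R M E "\<lambda>m. \<sigma> (\<iota> m)" by (intro rhom2.intro M.rmodule_axioms E.rmodule_axioms rhom2_axioms.intro si)
  define X where "X = {m \<in> mcarrier M. \<sigma> (\<iota> m) \<in> Mi}"
  have X: "rsubmodule R M X" unfolding X_def by (rule SI.preimg_sub[OF Mi_sub])
  define f where "f = (\<lambda>m. inv_into (mcarrier M) \<iota> (\<sigma> (\<iota> m)))"
  have f: "rhom R (restr M X) M f"
  proof -
    have c: "rhom R (restr M X) (restr E Mi) (\<lambda>m. \<sigma> (\<iota> m))"
      by (rule rhom_corestrict[OF SI.restr_hom]) (use X_def in auto)
    show ?thesis using rhom_comp[OF c I.inv_hom[OF iota_inj, folded Mi_def]] by (simp add: f_def)
  qed
  obtain g where g: "rhom R M M g" and gX: "\<forall>x\<in>X. g x = f x"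
    using qi X f unfolding quasi_injective_def by blast
  have ig: "rhom R M E (\<lambda>m. \<iota> (g m))" by (rule rhom_comp[OF g iota_hom])
  define d where "d = (\<lambda>m. madd E (\<sigma> (\<iota> m)) (\<ominus>\<^bsub>AG E\<^esub> (\<iota> (g m))))"
  have d: "rhom R M E d" unfolding d_def by (rule rhom_diff[OF E.rmod si ig])
  interpret D: rhom2 R M E d by (intro rhom2.intro M.rmodule_axioms E.rmodule_axioms rhom2_axioms.intro d)
  have gc: "g m \<in> mcarrier M" if "m \<in> mcarrier M" for m using g that by (auto simp: rhom_def)
  have "d ` mcarrier M \<inter> Mi \<subseteq> {mzero E}"
  proof
    fix y assume "y \<in> d ` mcarrier M \<inter> Mi"
    then obtain m m0 where m: "m \<in> mcarrier M" "y = d m" "m0 \<in> mcarrier M" "y = \<iota> m0"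
      unfolding Mi_def by blast
    have "\<sigma> (\<iota> m) = madd E (\<iota> m0) (\<iota> (g m))"
      using m gc[OF m(1)] E.add_eq_zero_iff unfolding d_def
      by (metis E.add_assoc E.neg_closed E.neg_l E.zero_r I.f_closed S.f_closed)
    also have "\<dots> = \<iota> (madd M m0 (g m))" using m gc by (simp add: I.f_add)
    finally have "\<sigma> (\<iota> m) \<in> Mi" unfolding Mi_def using m gc by auto
    then have "m \<in> X" using m X_def by blast
    then have "g m = f m" using gX by blast
    then have "\<iota> (g m) = \<sigma> (\<iota> m)" unfolding f_def using iota_inv \<open>\<sigma> (\<iota> m) \<in> Mi\<close> by simp
    then show "y \<in> {mzero E}" using m unfolding d_def by simp
  qed
  then have D0: "d ` mcarrier M = {mzero E}" by (rule ess0[OF D.img_sub_whole])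
  show ?thesis
  proof
    fix y assume "y \<in> \<sigma> ` Mi"
    then obtain m where m: "m \<in> mcarrier M" "y = \<sigma> (\<iota> m)" unfolding Mi_def by blast
    have "d m = mzero E" using D0 m by blast
    then have "\<sigma> (\<iota> m) = \<iota> (g m)" using m gc[OF m(1)] E.add_eq_zero_iff unfolding d_def by simp
    then show "y \<in> Mi" using m gc unfolding Mi_def by auto
  qed
qed

end


locale ai_ctx = hull_ctx R M E \<iota>
  for R :: "('r, 'c) ring_scheme" and M :: "('r, 'm) rmod" and E :: "('r, 'e) rmod" and \<iota> +
  fixes t t' u :: 'r
  assumes indec: "indecomposable R M"
    and aut: "\<And>\<sigma>. rautomorphism R E \<sigma> \<Longrightarrow> \<sigma> ` Mi \<subseteq> Mi"
    and tin: "t \<in> carrier R" "t' \<in> carrier R" "u \<in> carrier R"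
    and tc: "\<forall>r\<in>carrier R. t \<otimes>\<^bsub>R\<^esub> r = r \<otimes>\<^bsub>R\<^esub> t" "\<forall>r\<in>carrier R. t' \<otimes>\<^bsub>R\<^esub> r = r \<otimes>\<^bsub>R\<^esub> t'"
    and tt: "t \<oplus>\<^bsub>R\<^esub> t' \<oplus>\<^bsub>R\<^esub> t \<otimes>\<^bsub>R\<^esub> t' = \<zero>\<^bsub>R\<^esub>"
    and tu: "t \<otimes>\<^bsub>R\<^esub> u = \<one>\<^bsub>R\<^esub>"
begin

lemma M_nonzero: "\<exists>m\<in>mcarrier M. m \<noteq> mzero M"
proof -
  have "mcarrier M \<noteq> {mzero M}" using indec by (simp add: indecomposable_def)
  then show ?thesis using M.zero_closed by blast
qed

lemma unit_aut:
  assumes e: "rhom R E E e" and idem: "\<forall>x\<in>mcarrier E. e (e x) = e x"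
    and s: "s \<in> carrier R" "s' \<in> carrier R"
    and sc: "\<forall>r\<in>carrier R. s \<otimes>\<^bsub>R\<^esub> r = r \<otimes>\<^bsub>R\<^esub> s" "\<forall>r\<in>carrier R. s' \<otimes>\<^bsub>R\<^esub> r = r \<otimes>\<^bsub>R\<^esub> s'"
    and ss: "s \<oplus>\<^bsub>R\<^esub> s' \<oplus>\<^bsub>R\<^esub> s \<otimes>\<^bsub>R\<^esub> s' = \<zero>\<^bsub>R\<^esub>"
  shows "rautomorphism R E (\<lambda>x. madd E x (msmult E (e x) s))"
proof -
  interpret H: rhom2 R E E e by (intro rhom2.intro E.rmodule_axioms rhom2_axioms.intro e)
  define \<sigma> where "\<sigma> = (\<lambda>x. madd E x (msmult E (e x) s))"
  define \<tau> where "\<tau> = (\<lambda>x. madd E x (msmult E (e x) s'))"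
  have \<sigma>h: "rhom R E E \<sigma>" unfolding \<sigma>_def
    by (rule rhom_plus[OF E.rmod rhom_id[OF E.rmod] rhom_comp[OF e rhom_scal[OF E.rmod s(1) sc(1)]]])
  have ts: "s' \<otimes>\<^bsub>R\<^esub> s = s \<otimes>\<^bsub>R\<^esub> s'" using sc(1) s by simp
  have st: "\<sigma> (\<tau> x) = x" if x: "x \<in> mcarrier E" for x
  proof -
    have ex: "e x \<in> mcarrier E" using x by simp
    have "e (\<tau> x) = madd E (e x) (msmult E (e x) s')"
      unfolding \<tau>_def using x s idem by (simp add: H.f_add H.f_sm)
    then have "\<sigma> (\<tau> x) = madd E (madd E x (msmult E (e x) s'))
        (madd E (msmult E (e x) s) (msmult E (e x) (s' \<otimes>\<^bsub>R\<^esub> s)))"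
      unfolding \<sigma>_def using x ex s by (simp add: \<tau>_def E.sm_ladd E.sm_assoc)
    also have "\<dots> = madd E x (msmult E (e x) (s \<oplus>\<^bsub>R\<^esub> s' \<oplus>\<^bsub>R\<^esub> s \<otimes>\<^bsub>R\<^esub> s'))"
      using x ex s ts by (simp add: E.sm_radd E.add_ac)
    finally show ?thesis using ss x by simp
  qed
  have tsx: "\<tau> (\<sigma> x) = x" if x: "x \<in> mcarrier E" for x
  proof -
    have ex: "e x \<in> mcarrier E" using x by simp
    have "e (\<sigma> x) = madd E (e x) (msmult E (e x) s)"
      unfolding \<sigma>_def using x s idem by (simp add: H.f_add H.f_sm)
    then have "\<tau> (\<sigma> x) = madd E (madd E x (msmult E (e x) s))
        (madd E (msmult E (e x) s') (msmult E (e x) (s \<otimes>\<^bsub>R\<^esub> s')))"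
      unfolding \<tau>_def using x ex s by (simp add: \<sigma>_def E.sm_ladd E.sm_assoc)
    also have "\<dots> = madd E x (msmult E (e x) (s \<oplus>\<^bsub>R\<^esub> s' \<oplus>\<^bsub>R\<^esub> s \<otimes>\<^bsub>R\<^esub> s'))"
      using x ex s by (simp add: E.sm_radd E.add_ac)
    finally show ?thesis using ss x by simp
  qed
  have "bij_betw \<sigma> (mcarrier E) (mcarrier E)"
  proof (rule bij_betw_byWitness[where f' = \<tau>])
    show "\<forall>a\<in>mcarrier E. \<tau> (\<sigma> a) = a" using tsx by blast
    show "\<forall>a'\<in>mcarrier E. \<sigma> (\<tau> a') = a'" using st by blast
    show "\<sigma> ` mcarrier E \<subseteq> mcarrier E" unfolding \<sigma>_def using s by auto
    show "\<tau> ` mcarrier E \<subseteq> mcarrier E" unfolding \<tau>_def using s by auto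
  qed
  then show ?thesis using \<sigma>h unfolding rautomorphism_def \<sigma>_def by blast
qed

lemma idem_trivial:
  assumes e: "rhom R E E e" and idem: "\<forall>x\<in>mcarrier E. e (e x) = e x"
  shows "(\<forall>x\<in>mcarrier E. e x = mzero E) \<or> (\<forall>x\<in>mcarrier E. e x = x)"
proof -
  interpret H: rhom2 R E E e by (intro rhom2.intro E.rmodule_axioms rhom2_axioms.intro e)
  have sa: "rautomorphism R E (\<lambda>x. madd E x (msmult E (e x) t))"
    by (rule unit_aut[OF e idem tin(1,2) tc tt])
  have eMi: "e y \<in> Mi" if y: "y \<in> Mi" for y
  proof -
    have yc: "y \<in> mcarrier E" using y Mi_sub E.sub_mem by blast
    have "madd E y (msmult E (e y) t) \<in> Mi" using aut[OF sa] y by blast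
    then have "madd E (madd E y (msmult E (e y) t)) (\<ominus>\<^bsub>AG E\<^esub> y) \<in> Mi"
      using E.sub_diff[OF Mi_sub _ y] by blast
    moreover have "madd E (madd E y (msmult E (e y) t)) (\<ominus>\<^bsub>AG E\<^esub> y) = msmult E (e y) t"
      using yc tin by (simp add: E.add_ac)
    ultimately have "msmult E (e y) t \<in> Mi" by simp
    then have "msmult E (msmult E (e y) t) u \<in> Mi" using E.sub_sm[OF Mi_sub] tin by blast
    moreover have "msmult E (msmult E (e y) t) u = e y"
      using yc tin tu by (simp add: E.sm_assoc[symmetric])
    ultimately show ?thesis by simp
  qed
  have ei: "rhom R M E (\<lambda>m. e (\<iota> m))" by (rule rhom_comp[OF iota_hom e])
  have di: "rhom R M E (\<lambda>m. madd E (e (\<iota> m)) (\<ominus>\<^bsub>AG E\<^esub> (\<iota> m)))"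
    by (rule rhom_diff[OF E.rmod ei iota_hom])
  interpret EI: rhom2 R M E "\<lambda>m. e (\<iota> m)" by (intro rhom2.intro M.rmodule_axioms E.rmodule_axioms rhom2_axioms.intro ei)
  interpret DI: rhom2 R M E "\<lambda>m. madd E (e (\<iota> m)) (\<ominus>\<^bsub>AG E\<^esub> (\<iota> m))"
    by (intro rhom2.intro M.rmodule_axioms E.rmodule_axioms rhom2_axioms.intro di)
  define A where "A = {m \<in> mcarrier M. madd E (e (\<iota> m)) (\<ominus>\<^bsub>AG E\<^esub> (\<iota> m)) = mzero E}"
  define B where "B = {m \<in> mcarrier M. e (\<iota> m) = mzero E}"
  have As: "rsubmodule R M A" unfolding A_def by (rule DI.ker_sub)
  have Bs: "rsubmodule R M B" unfolding B_def by (rule EI.ker_sub)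
  have Aiff: "m \<in> A \<longleftrightarrow> m \<in> mcarrier M \<and> e (\<iota> m) = \<iota> m" for m
    unfolding A_def using E.add_eq_zero_iff by auto
  have AB: "A \<inter> B = {mzero M}"
  proof
    show "A \<inter> B \<subseteq> {mzero M}"
    proof
      fix m assume "m \<in> A \<inter> B"
      then have "m \<in> mcarrier M" "\<iota> m = mzero E" using Aiff B_def by auto
      then show "m \<in> {mzero M}" using iota_zero_iff by simp
    qed
    show "{mzero M} \<subseteq> A \<inter> B" using M.sub_zero[OF As] M.sub_zero[OF Bs] by blast
  qed
  have sum: "{madd M a b | a b. a \<in> A \<and> b \<in> B} = mcarrier M"
  proof
    show "{madd M a b | a b. a \<in> A \<and> b \<in> B} \<subseteq> mcarrier M"
      using M.sub_mem[OF As] M.sub_mem[OF Bs] by blast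
    show "mcarrier M \<subseteq> {madd M a b | a b. a \<in> A \<and> b \<in> B}"
    proof
      fix m assume m: "m \<in> mcarrier M"
      have "\<iota> m \<in> Mi" using m unfolding Mi_def by blast
      then have "e (\<iota> m) \<in> \<iota> ` mcarrier M" using eMi unfolding Mi_def by blast
      then obtain a where a: "a \<in> mcarrier M" "\<iota> a = e (\<iota> m)" by (elim imageE) simp
      have aA: "a \<in> A" using Aiff a idem m by simp
      define b where "b = madd M m (\<ominus>\<^bsub>AG M\<^esub> a)"
      have bc: "b \<in> mcarrier M" using a m b_def by simp
      have "e (\<iota> b) = madd E (e (\<iota> m)) (\<ominus>\<^bsub>AG E\<^esub> (e (\<iota> a)))"
        unfolding b_def using a m by (simp add: I.f_diff H.f_diff)
      also have "\<dots> = mzero E" using a idem m by simp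
      finally have bB: "b \<in> B" using bc B_def by simp
      have "madd M a b = m" unfolding b_def using a m by (simp add: M.add_comm[of m])
      then show "m \<in> {madd M a b | a b. a \<in> A \<and> b \<in> B}" using aA bB by blast
    qed
  qed
  have ind: "\<forall>A B. rsubmodule R M A \<and> rsubmodule R M B \<and> A \<inter> B = {mzero M} \<and>
        {madd M a b | a b. a \<in> A \<and> b \<in> B} = mcarrier M \<longrightarrow> A = {mzero M} \<or> B = {mzero M}"
    using indec unfolding indecomposable_def by (rule conjunct2)
  have "A = {mzero M} \<or> B = {mzero M}"
    using ind[rule_format, of A B] As Bs AB sum by blast
  then show ?thesis
  proof
    assume A0: "A = {mzero M}"
    have fd: "rhom R E E (\<lambda>x. madd E (e x) (\<ominus>\<^bsub>AG E\<^esub> x))"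
      by (rule rhom_diff[OF E.rmod e rhom_id[OF E.rmod]])
    interpret FD: rhom2 R E E "\<lambda>x. madd E (e x) (\<ominus>\<^bsub>AG E\<^esub> x)"
      by (intro rhom2.intro E.rmodule_axioms rhom2_axioms.intro fd)
    define Fix where "Fix = {x \<in> mcarrier E. madd E (e x) (\<ominus>\<^bsub>AG E\<^esub> x) = mzero E}"
    have Fs: "rsubmodule R E Fix" unfolding Fix_def by (rule FD.ker_sub)
    have Fiff: "x \<in> Fix \<longleftrightarrow> x \<in> mcarrier E \<and> e x = x" for x
      unfolding Fix_def using E.add_eq_zero_iff by auto
    have "Fix \<inter> Mi \<subseteq> {mzero E}"
    proof
      fix y assume y: "y \<in> Fix \<inter> Mi"
      then have "y \<in> \<iota> ` mcarrier M" unfolding Mi_def by blast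
      then obtain m where m: "m \<in> mcarrier M" "y = \<iota> m" by (elim imageE) simp
      have "e y = y" using y Fiff by blast
      then have "m \<in> A" using Aiff m by simp
      then show "y \<in> {mzero E}" using A0 m by simp
    qed
    then have F0: "Fix = {mzero E}" by (rule ess0[OF Fs])
    have "\<forall>x\<in>mcarrier E. e x = mzero E"
    proof
      fix x assume "x \<in> mcarrier E"
      then have "e x \<in> Fix" using Fiff idem by simp
      then show "e x = mzero E" using F0 by simp
    qed
    then show ?thesis by blast
  next
    assume B0: "B = {mzero M}"
    define Ker where "Ker = {x \<in> mcarrier E. e x = mzero E}"
    have Ks: "rsubmodule R E Ker" unfolding Ker_def by (rule H.ker_sub)
    have "Ker \<inter> Mi \<subseteq> {mzero E}"
    proof
      fix y assume y: "y \<in> Ker \<inter> Mi"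
      then have "y \<in> \<iota> ` mcarrier M" unfolding Mi_def by blast
      then obtain m where m: "m \<in> mcarrier M" "y = \<iota> m" by (elim imageE) simp
      have "e y = mzero E" using y Ker_def by blast
      then have "m \<in> B" using B_def m by simp
      then show "y \<in> {mzero E}" using B0 m by simp
    qed
    then have K0: "Ker = {mzero E}" by (rule ess0[OF Ks])
    have "\<forall>x\<in>mcarrier E. e x = x"
    proof
      fix x assume x: "x \<in> mcarrier E"
      have "e (madd E x (\<ominus>\<^bsub>AG E\<^esub> (e x))) = mzero E" using x idem by (simp add: H.f_diff)
      then have "madd E x (\<ominus>\<^bsub>AG E\<^esub> (e x)) \<in> Ker" using x Ker_def by simp
      then have "madd E x (\<ominus>\<^bsub>AG E\<^esub> (e x)) = mzero E" using K0 by simp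
      then show "e x = x" using E.add_eq_zero_iff x by simp
    qed
    then show ?thesis by blast
  qed
qed


lemma uniform:
  assumes K: "rsubmodule R E K" and L: "rsubmodule R E L"
    and K0: "K \<noteq> {mzero E}" and L0: "L \<noteq> {mzero E}"
  shows "K \<inter> L \<noteq> {mzero E}"
proof
  assume KL: "K \<inter> L = {mzero E}"
  obtain p where p: "rhom R E E p" "\<forall>x\<in>mcarrier E. p (p x) = p x"
    "\<exists>x\<in>mcarrier E. p x \<noteq> mzero E" "\<exists>x\<in>mcarrier E. p x \<noteq> x"
    using nontrivial_idem[OF E_inj K L K0 L0 KL] by blast
  show False using idem_trivial[OF p(1,2)] p(3,4) by blast
qed

lemma mono_aut:
  assumes h: "rhom R E E h" and k: "\<forall>x\<in>mcarrier E. h x = mzero E \<longrightarrow> x = mzero E"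
  shows "rautomorphism R E h"
proof -
  interpret H: rhom2 R E E h by (intro rhom2.intro E.rmodule_axioms rhom2_axioms.intro h)
  have inj: "inj_on h (mcarrier E)" using H.inj_iff_ker k by blast
  obtain g where g: "rhom R E E g" and gh: "\<forall>y\<in>h ` mcarrier E. g y = inv_into (mcarrier E) h y"
    using baer_extend[OF E_inj E.rmod H.img_sub_whole H.inv_hom[OF inj]] by blast
  have ghx: "g (h x) = x" if "x \<in> mcarrier E" for x
    using gh that inj by (simp add: inv_into_f_f)
  have gc: "g x \<in> mcarrier E" if "x \<in> mcarrier E" for x using g that by (auto simp: rhom_def)
  have e: "rhom R E E (\<lambda>x. h (g x))" by (rule rhom_comp[OF g h])
  have idem: "\<forall>x\<in>mcarrier E. h (g (h (g x))) = h (g x)" using ghx gc by simp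
  from idem_trivial[OF e idem] show ?thesis
  proof
    assume z: "\<forall>x\<in>mcarrier E. h (g x) = mzero E"
    obtain m where m: "m \<in> mcarrier M" "m \<noteq> mzero M" using M_nonzero by blast
    have y: "\<iota> m \<in> mcarrier E" "\<iota> m \<noteq> mzero E" using m iota_zero_iff by auto
    have "h (\<iota> m) = h (g (h (\<iota> m)))" using ghx y by simp
    also have "\<dots> = mzero E" using z y by simp
    finally have "\<iota> m = mzero E" using k y by blast
    then show ?thesis using y by simp
  next
    assume z: "\<forall>x\<in>mcarrier E. h (g x) = x"
    have "h ` mcarrier E = mcarrier E"
    proof
      show "h ` mcarrier E \<subseteq> mcarrier E" by auto
      show "mcarrier E \<subseteq> h ` mcarrier E"
      proof
        fix x assume "x \<in> mcarrier E"
        then have "x = h (g x)" "g x \<in> mcarrier E" using z gc by auto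
        then show "x \<in> h ` mcarrier E" by blast
      qed
    qed
    then show ?thesis unfolding rautomorphism_def bij_betw_def using h inj by blast
  qed
qed

lemma end_preserve:
  assumes h: "rhom R E E h"
  shows "h ` Mi \<subseteq> Mi"
proof -
  interpret H: rhom2 R E E h by (intro rhom2.intro E.rmodule_axioms rhom2_axioms.intro h)
  have uh: "rhom R E E (\<lambda>x. madd E x (\<ominus>\<^bsub>AG E\<^esub> (h x)))"
    by (rule rhom_diff[OF E.rmod rhom_id[OF E.rmod] h])
  interpret U: rhom2 R E E "\<lambda>x. madd E x (\<ominus>\<^bsub>AG E\<^esub> (h x))"
    by (intro rhom2.intro E.rmodule_axioms rhom2_axioms.intro uh)
  define K1 where "K1 = {x \<in> mcarrier E. h x = mzero E}"
  define K2 where "K2 = {x \<in> mcarrier E. madd E x (\<ominus>\<^bsub>AG E\<^esub> (h x)) = mzero E}"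
  have K1: "rsubmodule R E K1" unfolding K1_def by (rule H.ker_sub)
  have K2: "rsubmodule R E K2" unfolding K2_def by (rule U.ker_sub)
  have "K1 \<inter> K2 \<subseteq> {mzero E}"
  proof
    fix x assume "x \<in> K1 \<inter> K2"
    then have x: "x \<in> mcarrier E" "h x = mzero E" "madd E x (\<ominus>\<^bsub>AG E\<^esub> (h x)) = mzero E"
      unfolding K1_def K2_def by auto
    then have "x = h x" using E.add_eq_zero_iff by simp
    then show "x \<in> {mzero E}" using x by simp
  qed
  then have "K1 \<inter> K2 = {mzero E}" using E.sub_zero K1 K2 by blast
  then have "K1 = {mzero E} \<or> K2 = {mzero E}" using uniform[OF K1 K2] by blast
  then show ?thesis
  proof
    assume "K1 = {mzero E}"
    then have "\<forall>x\<in>mcarrier E. h x = mzero E \<longrightarrow> x = mzero E" unfolding K1_def by blast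
    then show ?thesis using aut[OF mono_aut[OF h]] by blast
  next
    assume "K2 = {mzero E}"
    then have "\<forall>x\<in>mcarrier E. madd E x (\<ominus>\<^bsub>AG E\<^esub> (h x)) = mzero E \<longrightarrow> x = mzero E"
      unfolding K2_def by blast
    then have uM: "(\<lambda>x. madd E x (\<ominus>\<^bsub>AG E\<^esub> (h x))) ` Mi \<subseteq> Mi" using aut[OF mono_aut[OF uh]] by blast
    show ?thesis
    proof
      fix z assume "z \<in> h ` Mi"
      then obtain y where y: "y \<in> Mi" "z = h y" by blast
      have yc: "y \<in> mcarrier E" using y Mi_sub E.sub_mem by blast
      have "madd E y (\<ominus>\<^bsub>AG E\<^esub> (h y)) \<in> Mi" using uM y by blast
      then have "madd E y (\<ominus>\<^bsub>AG E\<^esub> (madd E y (\<ominus>\<^bsub>AG E\<^esub> (h y)))) \<in> Mi"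
        using E.sub_diff[OF Mi_sub y(1)] by blast
      moreover have "madd E y (\<ominus>\<^bsub>AG E\<^esub> (madd E y (\<ominus>\<^bsub>AG E\<^esub> (h y)))) = h y"
        using yc by (simp add: E.neg_add)
      ultimately show "z \<in> Mi" using y by simp
    qed
  qed
qed

lemma quasi_inj: "quasi_injective R M"
  unfolding quasi_injective_def
proof (intro allI impI)
  fix N f assume a: "rsubmodule R M N \<and> rhom R (restr M N) M f"
  then have N: "rsubmodule R M N" and f: "rhom R (restr M N) M f" by auto
  have Nm: "\<And>n. n \<in> N \<Longrightarrow> n \<in> mcarrier M" using M.sub_mem[OF N] .
  have fc: "\<And>n. n \<in> N \<Longrightarrow> f n \<in> mcarrier M" using f by (auto simp: rhom_def)
  have fadd: "\<And>n n'. n \<in> N \<Longrightarrow> n' \<in> N \<Longrightarrow> f (madd M n n') = madd M (f n) (f n')"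
    using f by (auto simp: rhom_def)
  have fsm: "\<And>n r. n \<in> N \<Longrightarrow> r \<in> carrier R \<Longrightarrow> f (msmult M n r) = msmult M (f n) r"
    using f by (auto simp: rhom_def)
  define f' where "f' = (\<lambda>y. \<iota> (f (inv_into (mcarrier M) \<iota> y)))"
  have f'i: "f' (\<iota> n) = \<iota> (f n)" if "n \<in> N" for n
    unfolding f'_def using inv_iota Nm that by simp
  have iN: "rsubmodule R E (\<iota> ` N)" by (rule I.img_sub[OF N])
  have f'h: "rhom R (restr E (\<iota> ` N)) E f'"
    unfolding rhom_def restr_simps
  proof (intro conjI ballI)
    show "f' \<in> \<iota> ` N \<rightarrow> mcarrier E" using f'i fc by auto
  next
    fix y z assume "y \<in> \<iota> ` N" "z \<in> \<iota> ` N"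
    then obtain n n' where n: "n \<in> N" "n' \<in> N" "y = \<iota> n" "z = \<iota> n'" by blast
    have "madd E y z = \<iota> (madd M n n')" using n Nm by (simp add: I.f_add)
    then show "f' (madd E y z) = madd E (f' y) (f' z)"
      using n f'i M.sub_add[OF N] fadd fc by (simp add: I.f_add)
  next
    fix y r assume "y \<in> \<iota> ` N" "r \<in> carrier R"
    then obtain n where n: "n \<in> N" "y = \<iota> n" and r: "r \<in> carrier R" by blast
    have "msmult E y r = \<iota> (msmult M n r)" using n Nm r by (simp add: I.f_sm)
    then show "f' (msmult E y r) = msmult E (f' y) r"
      using n r f'i M.sub_sm[OF N] fsm fc by (simp add: I.f_sm)
  qed
  obtain h where h: "rhom R E E h" and hN: "\<forall>y\<in>\<iota> ` N. h y = f' y"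
    using baer_extend[OF E_inj E.rmod iN f'h] by blast
  have hM: "h ` Mi \<subseteq> Mi" by (rule end_preserve[OF h])
  define g where "g = (\<lambda>m. inv_into (mcarrier M) \<iota> (h (\<iota> m)))"
  have "rhom R M M g" unfolding g_def by (rule pullback_hom[OF h hM])
  moreover have "\<forall>n\<in>N. g n = f n"
  proof
    fix n assume n: "n \<in> N"
    have "h (\<iota> n) = \<iota> (f n)" using hN f'i n by simp
    then show "g n = f n" unfolding g_def using inv_iota fc n by simp
  qed
  ultimately show "\<exists>g. rhom R M M g \<and> (\<forall>x\<in>N. g x = f x)" by blast
qed

end

lemma field_scalars:
  assumes alg: "is_algebra_over F R \<phi>" and l: "l \<in> carrier F" "l \<noteq> \<zero>\<^bsub>F\<^esub>" "l \<noteq> \<one>\<^bsub>F\<^esub>"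
  shows "\<exists>t t' u. t \<in> carrier R \<and> t' \<in> carrier R \<and> u \<in> carrier R \<and>
    (\<forall>r\<in>carrier R. t \<otimes>\<^bsub>R\<^esub> r = r \<otimes>\<^bsub>R\<^esub> t) \<and> (\<forall>r\<in>carrier R. t' \<otimes>\<^bsub>R\<^esub> r = r \<otimes>\<^bsub>R\<^esub> t') \<and>
    t \<oplus>\<^bsub>R\<^esub> t' \<oplus>\<^bsub>R\<^esub> t \<otimes>\<^bsub>R\<^esub> t' = \<zero>\<^bsub>R\<^esub> \<and> t \<otimes>\<^bsub>R\<^esub> u = \<one>\<^bsub>R\<^esub>"
proof -
  interpret F: field F using alg by (simp add: is_algebra_over_def)
  interpret R: ring R using alg by (simp add: is_algebra_over_def)
  have hom: "\<phi> \<in> ring_hom F R" using alg by (simp add: is_algebra_over_def)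
  have cen: "\<And>a r. a \<in> carrier F \<Longrightarrow> r \<in> carrier R \<Longrightarrow> \<phi> a \<otimes>\<^bsub>R\<^esub> r = r \<otimes>\<^bsub>R\<^esub> \<phi> a"
    using alg by (simp add: is_algebra_over_def)
  have lU: "l \<in> Units F" using l F.field_Units by blast
  define li where "li = inv\<^bsub>F\<^esub> l"
  have li: "li \<in> carrier F" "l \<otimes>\<^bsub>F\<^esub> li = \<one>\<^bsub>F\<^esub>" using lU li_def by auto
  define a where "a = l \<ominus>\<^bsub>F\<^esub> \<one>\<^bsub>F\<^esub>"
  define b where "b = li \<ominus>\<^bsub>F\<^esub> \<one>\<^bsub>F\<^esub>"
  have ab: "a \<in> carrier F" "b \<in> carrier F" using a_def b_def l li by auto
  have la: "l = a \<oplus>\<^bsub>F\<^esub> \<one>\<^bsub>F\<^esub>" unfolding a_def using l by algebra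
  have a0: "a \<noteq> \<zero>\<^bsub>F\<^esub>"
  proof
    assume "a = \<zero>\<^bsub>F\<^esub>"
    then have "l = \<one>\<^bsub>F\<^esub>" using la by simp
    then show False using l by simp
  qed
  have aU: "a \<in> Units F" using ab a0 F.field_Units by blast
  define ai where "ai = inv\<^bsub>F\<^esub> a"
  have ai: "ai \<in> carrier F" "a \<otimes>\<^bsub>F\<^esub> ai = \<one>\<^bsub>F\<^esub>" using aU ai_def by auto
  have "a \<oplus>\<^bsub>F\<^esub> b \<oplus>\<^bsub>F\<^esub> a \<otimes>\<^bsub>F\<^esub> b = l \<otimes>\<^bsub>F\<^esub> li \<ominus>\<^bsub>F\<^esub> \<one>\<^bsub>F\<^esub>"
    unfolding a_def b_def using l li by algebra
  then have abz: "a \<oplus>\<^bsub>F\<^esub> b \<oplus>\<^bsub>F\<^esub> a \<otimes>\<^bsub>F\<^esub> b = \<zero>\<^bsub>F\<^esub>" using li by (simp add: F.minus_eq F.r_neg)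
  have "\<phi> a \<oplus>\<^bsub>R\<^esub> \<phi> b \<oplus>\<^bsub>R\<^esub> \<phi> a \<otimes>\<^bsub>R\<^esub> \<phi> b = \<phi> (a \<oplus>\<^bsub>F\<^esub> b \<oplus>\<^bsub>F\<^esub> a \<otimes>\<^bsub>F\<^esub> b)"
    using ab hom by (simp add: ring_hom_add ring_hom_mult)
  also have "\<dots> = \<zero>\<^bsub>R\<^esub>" using abz ring_hom_zero[OF hom F.ring_axioms R.ring_axioms] by simp
  finally have 1: "\<phi> a \<oplus>\<^bsub>R\<^esub> \<phi> b \<oplus>\<^bsub>R\<^esub> \<phi> a \<otimes>\<^bsub>R\<^esub> \<phi> b = \<zero>\<^bsub>R\<^esub>" .
  have 2: "\<phi> a \<otimes>\<^bsub>R\<^esub> \<phi> ai = \<one>\<^bsub>R\<^esub>"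
    using ab ai hom ring_hom_mult[OF hom, of a ai] ring_hom_one[OF hom] by simp
  have c: "\<phi> a \<in> carrier R" "\<phi> b \<in> carrier R" "\<phi> ai \<in> carrier R"
    using ring_hom_closed[OF hom] ab ai by auto
  have ca: "\<forall>r\<in>carrier R. \<phi> a \<otimes>\<^bsub>R\<^esub> r = r \<otimes>\<^bsub>R\<^esub> \<phi> a" using cen ab(1) by blast
  have cb: "\<forall>r\<in>carrier R. \<phi> b \<otimes>\<^bsub>R\<^esub> r = r \<otimes>\<^bsub>R\<^esub> \<phi> b" using cen ab(2) by blast
  have all: "\<phi> a \<in> carrier R \<and> \<phi> b \<in> carrier R \<and> \<phi> ai \<in> carrier R \<and>
    (\<forall>r\<in>carrier R. \<phi> a \<otimes>\<^bsub>R\<^esub> r = r \<otimes>\<^bsub>R\<^esub> \<phi> a) \<and> (\<forall>r\<in>carrier R. \<phi> b \<otimes>\<^bsub>R\<^esub> r = r \<otimes>\<^bsub>R\<^esub> \<phi> b) \<and>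
    \<phi> a \<oplus>\<^bsub>R\<^esub> \<phi> b \<oplus>\<^bsub>R\<^esub> \<phi> a \<otimes>\<^bsub>R\<^esub> \<phi> b = \<zero>\<^bsub>R\<^esub> \<and> \<phi> a \<otimes>\<^bsub>R\<^esub> \<phi> ai = \<one>\<^bsub>R\<^esub>"
    using 1 2 c ca cb by (intro conjI)
  show ?thesis by (rule exI, rule exI, rule exI, rule all)
qed

lemma qi_invariant_global:
  assumes Mm: "right_module R M" and hull: "injective_hull R M E \<iota>"
    and qi: "quasi_injective R M" and \<sigma>: "rautomorphism R E \<sigma>"
  shows "\<sigma> ` \<iota> ` mcarrier M \<subseteq> \<iota> ` mcarrier M"
proof -
  have Em: "right_module R E" using hull by (simp add: injective_hull_def rinjective_def)
  have ctx: "hull_ctx R M E \<iota>"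
    by (rule hull_ctx.intro[OF rmodule.intro[OF Mm] rmodule.intro[OF Em] hull_ctx_axioms.intro[OF hull]])
  have "rhom R E E \<sigma>" using \<sigma> by (simp add: rautomorphism_def)
  from hull_ctx.qi_invariant[OF ctx qi this] show ?thesis by (simp add: hull_ctx.Mi_def[OF ctx])
qed

lemma quasi_inj_global:
  assumes Mm: "right_module R M" and hull: "injective_hull R M E \<iota>"
    and ind: "indecomposable R M"
    and autM: "\<And>\<sigma>. rautomorphism R E \<sigma> \<Longrightarrow> \<sigma> ` (\<iota> ` mcarrier M) \<subseteq> \<iota> ` mcarrier M"
    and tin: "t \<in> carrier R" "t' \<in> carrier R" "u \<in> carrier R"
    and tc: "\<forall>r\<in>carrier R. t \<otimes>\<^bsub>R\<^esub> r = r \<otimes>\<^bsub>R\<^esub> t" "\<forall>r\<in>carrier R. t' \<otimes>\<^bsub>R\<^esub> r = r \<otimes>\<^bsub>R\<^esub> t'"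
    and tt: "t \<oplus>\<^bsub>R\<^esub> t' \<oplus>\<^bsub>R\<^esub> t \<otimes>\<^bsub>R\<^esub> t' = \<zero>\<^bsub>R\<^esub>"
    and tu: "t \<otimes>\<^bsub>R\<^esub> u = \<one>\<^bsub>R\<^esub>"
  shows "quasi_injective R M"
proof -
  have Em: "right_module R E" using hull by (simp add: injective_hull_def rinjective_def)
  have ctx: "hull_ctx R M E \<iota>"
    by (rule hull_ctx.intro[OF rmodule.intro[OF Mm] rmodule.intro[OF Em] hull_ctx_axioms.intro[OF hull]])
  have autM': "\<And>\<sigma>. rautomorphism R E \<sigma> \<Longrightarrow> \<sigma> ` hull_ctx.Mi M \<iota> \<subseteq> hull_ctx.Mi M \<iota>"
    using autM by (simp add: hull_ctx.Mi_def[OF ctx])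
  have "ai_ctx R M E \<iota> t t' u"
    by (rule ai_ctx.intro[OF ctx ai_ctx_axioms.intro[OF ind autM' tin tc tt tu]])
  then show ?thesis by (rule ai_ctx.quasi_inj)
qed

theorem corollary6:
  fixes F :: "'f ring" and R :: "'r ring" and \<phi> :: "'f \<Rightarrow> 'r"
  assumes alg: "is_algebra_over F R \<phi>"
    and three: "\<exists>a\<in>carrier F. \<exists>b\<in>carrier F. \<exists>c\<in>carrier F. a \<noteq> b \<and> a \<noteq> c \<and> b \<noteq> c"
    and hulls: "\<forall>M :: ('r, 'm) rmod. right_module R M \<and> indecomposable R M \<longrightarrow>
                  (\<exists>(E :: ('r, 'e) rmod) \<iota>. injective_hull R M E \<iota>)"
  shows "right_invariant_module_type R TYPE('m) \<longleftrightarrow>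
         (\<forall>M :: ('r, 'm) rmod. right_module R M \<and> indecomposable R M \<longrightarrow>
              aut_invariant R M TYPE('e))"
proof -
  obtain l where l: "l \<in> carrier F" "l \<noteq> \<zero>\<^bsub>F\<^esub>" "l \<noteq> \<one>\<^bsub>F\<^esub>"
  proof -
    obtain a b c where abc: "a \<in> carrier F" "b \<in> carrier F" "c \<in> carrier F" "a \<noteq> b" "a \<noteq> c" "b \<noteq> c"
      using three by blast
    show ?thesis
    proof (cases "a \<noteq> \<zero>\<^bsub>F\<^esub> \<and> a \<noteq> \<one>\<^bsub>F\<^esub>")
      case True then show ?thesis using that abc by blast
    next
      case False
      show ?thesis
      proof (cases "b \<noteq> \<zero>\<^bsub>F\<^esub> \<and> b \<noteq> \<one>\<^bsub>F\<^esub>")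
        case True then show ?thesis using that abc by blast
      next
        case False2: False
        have "c \<noteq> \<zero>\<^bsub>F\<^esub> \<and> c \<noteq> \<one>\<^bsub>F\<^esub>" using False False2 abc by auto
        then show ?thesis using that abc by blast
      qed
    qed
  qed
  obtain t t' u where tu: "t \<in> carrier R" "t' \<in> carrier R" "u \<in> carrier R"
    "\<forall>r\<in>carrier R. t \<otimes>\<^bsub>R\<^esub> r = r \<otimes>\<^bsub>R\<^esub> t" "\<forall>r\<in>carrier R. t' \<otimes>\<^bsub>R\<^esub> r = r \<otimes>\<^bsub>R\<^esub> t'"
    "t \<oplus>\<^bsub>R\<^esub> t' \<oplus>\<^bsub>R\<^esub> t \<otimes>\<^bsub>R\<^esub> t' = \<zero>\<^bsub>R\<^esub>" "t \<otimes>\<^bsub>R\<^esub> u = \<one>\<^bsub>R\<^esub>"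
    using field_scalars[OF alg l] by blast
  show ?thesis
  proof
    assume rimt: "right_invariant_module_type R TYPE('m)"
    show "\<forall>M :: ('r, 'm) rmod. right_module R M \<and> indecomposable R M \<longrightarrow> aut_invariant R M TYPE('e)"
    proof (intro allI impI)
      fix M :: "('r, 'm) rmod" assume M: "right_module R M \<and> indecomposable R M"
      have qi: "quasi_injective R M" using rimt M unfolding right_invariant_module_type_def by blast
      show "aut_invariant R M TYPE('e)" unfolding aut_invariant_def
        using qi_invariant_global[OF _ _ qi] M by blast
    qed
  next
    assume ai: "\<forall>M :: ('r, 'm) rmod. right_module R M \<and> indecomposable R M \<longrightarrow> aut_invariant R M TYPE('e)"
    show "right_invariant_module_type R TYPE('m)" unfolding right_invariant_module_type_def
    proof (intro allI impI)
      fix M :: "('r, 'm) rmod" assume M: "right_module R M \<and> indecomposable R M"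
      obtain E :: "('r, 'e) rmod" and \<iota> where hull: "injective_hull R M E \<iota>" using hulls M by blast
      have aiM: "aut_invariant R M TYPE('e)" using ai M by blast
      have autM: "\<And>\<sigma>. rautomorphism R E \<sigma> \<Longrightarrow> \<sigma> ` (\<iota> ` mcarrier M) \<subseteq> \<iota> ` mcarrier M"
        using aiM hull unfolding aut_invariant_def by blast
      show "quasi_injective R M"
        by (rule quasi_inj_global[OF _ hull _ autM tu]) (use M in blast)+
    qed
  qed
qed

end
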